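(* Let $V,W\in\mathbf{R}^{r\times n}$ be configurations of $n$ vectors in $\mathbf{R}^r$ in general position. Then $$f^*_W(x,y)-f^*_V(x,y)=\sum_{j,k}g_{j,k}(W\to V)\,(x+y)^k(x+1)^{n-r-k}y^j,$$ where $g_{j,k}(W\to V)=-g_{j,k}(V\to W)$.
   Context: Throughout, $n\ge r\ge1$, $[n]=\{1,\dots,n\}$. A vector configuration is a matrix $V=[v_1|\cdots|v_n]\in\mathbf{R}^{r\times n}$; it is in general position if any $r$ columns are linearly independent. For $F\in\{-1,0,+1\}^n$ let $F_+,F_0,F_-$ be the sets of $i$ with $F_i=+1,0,-1$. $\mathcal{F}(V)$ is the set of sign vectors $(\operatorname{sgn}\langle v_1,u\rangle,\dots,\operatorname{sgn}\langle v_n,u\rangle)$, $u\in\mathbf{R}^r\setminus\{0\}$. $\mathcal{F}^*(V)$ (dependency patterns) is the set of sign vectors $(\operatorname{sgn}\lambda_1,\dots,\operatorname{sgn}\lambda_n)$ over all nontrivial linear dependencies $\sum_i\lambda_iv_i=0$ (not all $\lambda_i$ zero). The $f^*$-polynomial is $f^*_V(x,y)=\sum_{F\in\mathcal{F}^*(V)}x^{|F_0|}y^{|F_-|}$. Mutations: $V,W$ in general position differ by a mutation if there is a continuous path $V(t)$, $t\in[0,1]$, $V(0)=V$, $V(1)=W$, and $t_0\in(0,1)$ such that $V(t)$ is in general position for $t\neq t_0$, at $t_0$ exactly one $r$-set $R\subseteq[n]$ of columns is dependent, all $(r-1)$-sets of columns of $V(t_0)$ are independent, and $\operatorname{sgn}\det[v_i(t)]_{i\in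 R}$ changes at $t_0$. There is then $Y\in\{\pm1\}^n$ such that the elements of $\{\pm1\}^n$ in $\mathcal{F}(W)\setminus\mathcal{F}(V)$ are exactly $\pm Y$; with $i=|R\cap Y_-|$, $\ell=|Y_-\setminus R|$, the mutation is of type $(i,\ell)\equiv(r-i,n-r-\ell)$. Any two configurations in general position are joined by a finite sequence of mutations. For a single mutation of type $(i,\ell)$, $g(V\to W)\in\mathbf{Z}^{(r+1)\times(n-r+1)}$ (indices $0\le j\le r$, $0\le k\le n-r$) is $0$ if $2i=r$ or $2\ell=n-r$, and otherwise has entries $+1$ at $(i,\ell)$ and $(r-i,n-r-\ell)$, $-1$ at $(r-i,\ell)$ and $(i,n-r-\ell)$, $0$ elsewhere; for a sequence of mutations $V=V_0,\dots,V_N=W$, $g(V\to W)=\sum_s g(V_{s-1}\to V_s)$ (this depends only on $V$ and $W$). *)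

theory Defs
  imports "HOL-Analysis.Analysis"
begin

text \<open>A configuration of n vectors in R^r is a function V :: nat => real^'r;
  only the columns V 0, ..., V (n-1) are relevant (columns are indexed 0..n-1).
  Sign vectors are functions nat => real with values in {-1,0,1} on {..<n}
  and value 0 outside {..<n}.\<close>

definition cols_indep :: "(nat \<Rightarrow> real^'r) \<Rightarrow> nat set \<Rightarrow> bool" where
  "cols_indep V S \<longleftrightarrow> (\<forall>c. (\<Sum>i\<in>S. c i *\<^sub>R V i) = 0 \<longrightarrow> (\<forall>i\<in>S. c i = 0))"

definition gen_pos :: "nat \<Rightarrow> (nat \<Rightarrow> real^'r) \<Rightarrow> bool" where
  "gen_pos n V \<longleftrightarrow>
     (\<forall>S. S \<subseteq> {..<n} \<and> card S = CARD('r) \<longrightarrow> cols_indep V S)"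

definition covectors :: "nat \<Rightarrow> (nat \<Rightarrow> real^'r) \<Rightarrow> (nat \<Rightarrow> real) set" where
  "covectors n V = {F. \<exists>u. u \<noteq> 0 \<and> F = (\<lambda>i. if i < n then sgn (V i \<bullet> u) else 0)}"

definition dep_patterns :: "nat \<Rightarrow> (nat \<Rightarrow> real^'r) \<Rightarrow> (nat \<Rightarrow> real) set" where
  "dep_patterns n V = {F. \<exists>lam::nat \<Rightarrow> real. (\<exists>i<n. lam i \<noteq> 0) \<and>
        (\<Sum>i<n. lam i *\<^sub>R V i) = 0 \<and> F = (\<lambda>i. if i < n then sgn (lam i) else 0)}"

definition fstar :: "nat \<Rightarrow> (nat \<Rightarrow> real^'r) \<Rightarrow> real \<Rightarrow> real \<Rightarrow> real" where
  "fstar n V x y = (\<Sum>F\<in>dep_patterns n V.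
       x ^ card {i. i < n \<and> F i = 0} * y ^ card {i. i < n \<and> F i = -1})"

text \<open>Determinant of the r x r matrix with columns V i, i in R (for a fixed
  enumeration of R; only its sign change along a path matters).\<close>
definition det_cols :: "(nat \<Rightarrow> real^'r) \<Rightarrow> nat set \<Rightarrow> real" where
  "det_cols V R = (let e = (SOME e. bij_betw e (UNIV::'r set) R)
                   in det (\<chi> a b. V (e b) $ a :: real^'r^'r))"

definition gmat :: "nat \<Rightarrow> nat \<Rightarrow> nat \<Rightarrow> nat \<Rightarrow> nat \<Rightarrow> nat \<Rightarrow> int" where
  "gmat r n i l = (\<lambda>j k.
     if 2 * i = r \<or> 2 * l = n - r then 0
     else (if (j, k) = (i, l) then 1 else 0) + (if (j, k) = (r - i, n - r - l) then 1 else 0)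
        - (if (j, k) = (r - i, l) then 1 else 0) - (if (j, k) = (i, n - r - l) then 1 else 0))"

definition mutation :: "nat \<Rightarrow> (nat \<Rightarrow> real^'r) \<Rightarrow> (nat \<Rightarrow> real^'r) \<Rightarrow> (nat \<Rightarrow> nat \<Rightarrow> int) \<Rightarrow> bool" where
  "mutation n V W G \<longleftrightarrow> gen_pos n V \<and> gen_pos n W \<and>
    (\<exists>(P :: real \<Rightarrow> nat \<Rightarrow> real^'r) t0 R Y.
       (\<forall>i<n. continuous_on {0..1} (\<lambda>t. P t i)) \<and>
       (\<forall>i<n. P 0 i = V i) \<and> (\<forall>i<n. P 1 i = W i) \<and>
       0 < t0 \<and> t0 < 1 \<and>
       (\<forall>t\<in>{0..1}. t \<noteq> t0 \<longrightarrow> gen_pos n (P t)) \<and>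
       R \<subseteq> {..<n} \<and> card R = CARD('r) \<and>
       (\<forall>S. S \<subseteq> {..<n} \<and> card S = CARD('r) \<longrightarrow> (\<not> cols_indep (P t0) S \<longleftrightarrow> S = R)) \<and>
       (\<forall>S. S \<subseteq> {..<n} \<and> card S = CARD('r) - 1 \<longrightarrow> cols_indep (P t0) S) \<and>
       (\<forall>s t. 0 \<le> s \<and> s < t0 \<and> t0 < t \<and> t \<le> 1 \<longrightarrow>
            sgn (det_cols (P s) R) \<noteq> sgn (det_cols (P t) R)) \<and>
       (\<forall>i<n. Y i \<in> {-1, 1}) \<and> (\<forall>i\<ge>n. Y i = 0) \<and>
       {F \<in> covectors n W - covectors n V. \<forall>i<n. F i \<in> {-1, 1}} = {Y, - Y} \<and>
       G = gmat (CARD('r)) n (card (R \<inter> {j. Y j = -1})) (card ({j. j < n \<and> Y j = -1} - R)))"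

definition mut_seq :: "nat \<Rightarrow> (nat \<Rightarrow> real^'r) \<Rightarrow> (nat \<Rightarrow> real^'r) \<Rightarrow> (nat \<Rightarrow> nat \<Rightarrow> int) \<Rightarrow> bool" where
  "mut_seq n V W G \<longleftrightarrow>
    (\<exists>(Vs :: nat \<Rightarrow> nat \<Rightarrow> real^'r) (Gs :: nat \<Rightarrow> nat \<Rightarrow> nat \<Rightarrow> int) N.
       (\<forall>i<n. Vs 0 i = V i) \<and> (\<forall>i<n. Vs N i = W i) \<and>
       (\<forall>s<N. mutation n (Vs s) (Vs (Suc s)) (Gs s)) \<and>
       G = (\<lambda>j k. \<Sum>s<N. Gs s j k))"

end

theory Submission
  imports Defs "HOL-Library.FuncSet"
begin

definition Mat :: "(nat \<Rightarrow> real^'r) \<Rightarrow> ('r \<Rightarrow> nat) \<Rightarrow> real^'r^'r" where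
  "Mat V e = (\<chi> a b. V (e b) $ a)"

lemma Mat_mult: "Mat V e *v x = (\<Sum>j\<in>UNIV. x$j *\<^sub>R V (e j))"
  by (simp add: Mat_def vec_eq_iff matrix_vector_mult_def sum_component mult.commute)

lemma det_nz_iff_ker: "det (A::real^'r^'r) \<noteq> 0 \<longleftrightarrow> (\<forall>x. A *v x = 0 \<longrightarrow> x = 0)"
  by (metis invertible_det_nz invertible_left_inverse matrix_left_invertible_ker)

lemma indep_det:
  assumes e: "bij_betw e (UNIV::'r set) S"
  shows "cols_indep (V::nat \<Rightarrow> real^'r) S \<longleftrightarrow> det (Mat V e) \<noteq> 0"
proof -
  have inj: "inj e" using e by (rule bij_betw_imp_inj_on)
  have S: "S = range e" using e by (simp add: bij_betw_imp_surj_on)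
  have re: "\<And>c. (\<Sum>i\<in>S. c i *\<^sub>R V i) = (\<Sum>j\<in>UNIV. c (e j) *\<^sub>R V (e j))"
    unfolding S by (rule sum.reindex[OF inj, unfolded comp_def])
  show ?thesis
  proof
    assume ci: "cols_indep V S"
    show "det (Mat V e) \<noteq> 0" unfolding det_nz_iff_ker
    proof (intro allI impI)
      fix x assume "Mat V e *v x = 0"
      hence h: "(\<Sum>i\<in>S. (\<lambda>i. x $ (inv e i)) i *\<^sub>R V i) = 0" unfolding re Mat_mult inv_f_f[OF inj] .
      have "\<forall>i\<in>S. x $ (inv e i) = 0" using ci[unfolded cols_indep_def, THEN spec, THEN mp, OF h] .
      thus "x = 0" unfolding S vec_eq_iff by (simp add: inv_f_f[OF inj])
    qed
  next
    assume d: "det (Mat V e) \<noteq> 0"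
    show "cols_indep V S" unfolding cols_indep_def
    proof (intro allI impI)
      fix c assume "(\<Sum>i\<in>S. c i *\<^sub>R V i) = 0"
      hence "Mat V e *v (\<chi> j. c (e j)) = 0" unfolding re Mat_mult by simp
      hence "(\<chi> j. c (e j)) = 0" using d unfolding det_nz_iff_ker by simp
      thus "\<forall>i\<in>S. c i = 0" unfolding S by (auto simp: vec_eq_iff)
    qed
  qed
qed

lemma ex_enum:
  assumes "finite S" "card S = CARD('r)"
  shows "\<exists>e. bij_betw e (UNIV::'r::finite set) S"
  using finite_same_card_bij[of "UNIV::'r set" S] assms by auto

lemma indep_mono:
  assumes "cols_indep V T" "S \<subseteq> T" "finite T"
  shows "cols_indep V S"
  unfolding cols_indep_def
proof (intro allI impI)
  fix c assume h: "(\<Sum>i\<in>S. c i *\<^sub>R V i) = 0"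
  let ?c = "\<lambda>i. if i \<in> S then c i else 0"
  have "(\<Sum>i\<in>T. ?c i *\<^sub>R V i) = (\<Sum>i\<in>S. c i *\<^sub>R V i)"
    using assms(2,3) by (intro sum.mono_neutral_cong_right) auto
  hence "(\<Sum>i\<in>T. ?c i *\<^sub>R V i) = 0" using h by simp
  hence "\<forall>i\<in>T. ?c i = 0" by (rule assms(1)[unfolded cols_indep_def, THEN spec, THEN mp])
  thus "\<forall>i\<in>S. c i = 0" using assms(2) by (metis subsetD)
qed

lemma superset_card:
  assumes "finite U" "S \<subseteq> U" "card S \<le> k" "k \<le> card U"
  obtains T where "S \<subseteq> T" "T \<subseteq> U" "card T = k"
proof -
  have fS: "finite S" using assms(1,2) by (rule finite_subset[rotated])
  have "card (U - S) = card U - card S" using assms(1,2) fS by (simp add: card_Diff_subset)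
  hence "k - card S \<le> card (U - S)" using assms(3,4) by simp
  then obtain T0 where T0: "T0 \<subseteq> U - S" "card T0 = k - card S" "finite T0"
    by (rule obtain_subset_with_card_n)
  have "card (S \<union> T0) = card S + card T0" using T0 fS
    by (intro card_Un_disjoint) auto
  hence "card (S \<union> T0) = k" using T0 assms(3) by simp
  thus ?thesis using that T0 assms(2) by blast
qed

lemma gp_indep:
  assumes "gen_pos n (V::nat \<Rightarrow> real^'r)" "CARD('r) \<le> n" "S \<subseteq> {..<n}" "card S \<le> CARD('r)"
  shows "cols_indep V S"
proof -
  obtain T where T: "S \<subseteq> T" "T \<subseteq> {..<n}" "card T = CARD('r)"
    using superset_card[of "{..<n}" S "CARD('r)"] assms(2,3,4) by auto
  have "cols_indep V T" using assms(1) T unfolding gen_pos_def by blast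
  moreover have "finite T" using T(2) finite_subset by blast
  ultimately show ?thesis using T(1) indep_mono by blast
qed

lemma indep_zero:
  assumes "cols_indep V S" "S \<subseteq> {..<n}" "(\<Sum>i<n. c i *\<^sub>R V i) = 0" "\<forall>i<n. i \<notin> S \<longrightarrow> c i = 0"
  shows "\<forall>i\<in>S. c i = 0"
proof -
  have "(\<Sum>i<n. c i *\<^sub>R V i) = (\<Sum>i\<in>S. c i *\<^sub>R V i)"
    using assms(2,4) by (intro sum.mono_neutral_right) auto
  hence "(\<Sum>i\<in>S. c i *\<^sub>R V i) = 0" using assms(3) by simp
  thus ?thesis using assms(1)[unfolded cols_indep_def, THEN spec, THEN mp] by blast
qed

lemma gp_span:
  assumes "gen_pos n (V::nat \<Rightarrow> real^'r)" "T \<subseteq> {..<n}" "CARD('r) \<le> card T"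
  shows "\<exists>c. w = (\<Sum>i\<in>T. c i *\<^sub>R V i)"
proof -
  obtain T' where T': "T' \<subseteq> T" "card T' = CARD('r)" "finite T'"
    using obtain_subset_with_card_n[OF assms(3)] by metis
  obtain e where e: "bij_betw e (UNIV::'r set) T'" using ex_enum T' by blast
  have "cols_indep V T'" using assms(1,2) T' unfolding gen_pos_def by auto
  hence "det (Mat V e) \<noteq> 0" using indep_det[OF e] by blast
  hence "invertible (Mat V e)" by (simp add: invertible_det_nz)
  then obtain B where "Mat V e ** B = mat 1" unfolding invertible_def by blast
  hence "Mat V e *v (B *v w) = w" by (simp add: matrix_vector_mul_assoc)
  then obtain x where x: "Mat V e *v x = w" by blast
  have inj: "inj e" using e by (rule bij_betw_imp_inj_on)
  have S: "T' = range e" using e by (simp add: bij_betw_imp_surj_on)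
  have fT: "finite T" using assms(2) finite_subset by blast
  let ?c = "\<lambda>i. if i \<in> T' then x $ (inv e i) else 0"
  have "(\<Sum>i\<in>T. ?c i *\<^sub>R V i) = (\<Sum>i\<in>T'. x $ (inv e i) *\<^sub>R V i)"
    using T'(1) fT by (intro sum.mono_neutral_cong_right) auto
  also have "\<dots> = (\<Sum>j\<in>UNIV. x $ j *\<^sub>R V (e j))"
    unfolding S by (simp add: sum.reindex[OF inj] inv_f_f[OF inj])
  also have "\<dots> = w" using x Mat_mult by metis
  finally show ?thesis by metis
qed

definition isdep :: "nat \<Rightarrow> (nat \<Rightarrow> real^'r) \<Rightarrow> (nat \<Rightarrow> real) \<Rightarrow> bool" where
  "isdep n V lam \<longleftrightarrow> (\<Sum>i<n. lam i *\<^sub>R V i) = 0"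

definition supp :: "nat \<Rightarrow> (nat \<Rightarrow> real) \<Rightarrow> nat set" where
  "supp n lam = {i. i < n \<and> lam i \<noteq> 0}"

definition sv :: "nat \<Rightarrow> (nat \<Rightarrow> real) \<Rightarrow> nat \<Rightarrow> real" where
  "sv n lam = (\<lambda>i. if i < n then sgn (lam i) else 0)"

lemma dep_patterns_iff:
  "F \<in> dep_patterns n V \<longleftrightarrow> (\<exists>lam. supp n lam \<noteq> {} \<and> isdep n V lam \<and> F = sv n lam)"
  unfolding dep_patterns_def isdep_def supp_def sv_def by auto

lemma supp_sub: "supp n lam \<subseteq> {..<n}" unfolding supp_def by auto
lemma finite_supp[simp]: "finite (supp n lam)" using supp_sub finite_subset by blast

lemma sgn_small:
  fixes a b :: real
  assumes "\<bar>b\<bar> < \<bar>a\<bar>"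
  shows "sgn (a + b) = sgn a"
  using assms by (cases "a > 0") (auto simp: sgn_if abs_less_iff split: if_splits)

lemma isdep_supp_sum:
  assumes "isdep n V lam"
  shows "(\<Sum>i\<in>supp n lam. lam i *\<^sub>R V i) = 0"
proof -
  have "(\<Sum>i<n. lam i *\<^sub>R V i) = (\<Sum>i\<in>supp n lam. lam i *\<^sub>R V i)"
    by (rule sum.mono_neutral_right) (auto simp: supp_def)
  thus ?thesis using assms unfolding isdep_def by simp
qed

lemma supp_card:
  assumes gp: "gen_pos n (V::nat \<Rightarrow> real^'r)" and rn: "CARD('r) \<le> n"
    and d: "isdep n V lam" and ne: "supp n lam \<noteq> {}"
  shows "CARD('r) + 1 \<le> card (supp n lam)"
proof (rule ccontr)
  assume "\<not> ?thesis"
  hence "card (supp n lam) \<le> CARD('r)" by simp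
  hence ci: "cols_indep V (supp n lam)" using gp_indep[OF gp rn supp_sub] by blast
  have "\<forall>i\<in>supp n lam. lam i = 0"
    using indep_zero[OF ci supp_sub d[unfolded isdep_def]] by (auto simp: supp_def)
  thus False using ne by (auto simp: supp_def)
qed

lemma isdep_lin:
  assumes "isdep n V a" "isdep n V b"
  shows "isdep n V (\<lambda>i. a i + c * b i)"
proof -
  have "(\<Sum>i<n. (a i + c * b i) *\<^sub>R V i) = (\<Sum>i<n. a i *\<^sub>R V i) + c *\<^sub>R (\<Sum>i<n. b i *\<^sub>R V i)"
    by (simp add: scaleR_add_left sum.distrib scaleR_sum_right)
  thus ?thesis using assms unfolding isdep_def by simp
qed

lemma isdep_cong:
  assumes "isdep n V a" "\<forall>i<n. V i = W i"
  shows "isdep n W a"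
  using assms unfolding isdep_def by (metis (no_types, lifting) lessThan_iff sum.cong)

lemma dep_up:
  assumes gp: "gen_pos n (V::nat \<Rightarrow> real^'r)" and rn: "CARD('r) \<le> n"
    and d: "isdep n V lam" and ne: "supp n lam \<noteq> {}"
    and F1: "\<forall>i<n. F i \<in> {-1,0,1}" and F2: "\<forall>i\<ge>n. F i = 0"
    and conf: "\<forall>i<n. lam i \<noteq> 0 \<longrightarrow> F i = sgn (lam i)"
  shows "F \<in> dep_patterns n V"
proof -
  define T where "T = supp n lam"
  define U where "U = {i. i < n \<and> F i \<noteq> 0 \<and> lam i = 0}"
  have TU: "T \<inter> U = {}" unfolding T_def U_def supp_def by auto
  have Tn: "T \<subseteq> {..<n}" "U \<subseteq> {..<n}" unfolding T_def U_def supp_def by auto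
  have fin: "finite T" "finite U" using Tn finite_subset by auto
  have cT: "CARD('r) \<le> card T" using supp_card[OF gp rn d ne] unfolding T_def by simp
  define w where "w = (\<Sum>j\<in>U. F j *\<^sub>R V j)"
  obtain c where c: "w = (\<Sum>i\<in>T. c i *\<^sub>R V i)" using gp_span[OF gp Tn(1) cT] by blast
  define nu where "nu = (\<lambda>i. if i \<in> U then F i else if i \<in> T then - c i else 0)"
  have "(\<Sum>i<n. nu i *\<^sub>R V i) = (\<Sum>i\<in>T \<union> U. nu i *\<^sub>R V i)"
    using Tn by (intro sum.mono_neutral_right) (auto simp: nu_def)
  also have "\<dots> = (\<Sum>i\<in>T. nu i *\<^sub>R V i) + (\<Sum>i\<in>U. nu i *\<^sub>R V i)"
    using fin TU by (rule sum.union_disjoint)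
  also have "(\<Sum>i\<in>T. nu i *\<^sub>R V i) = (\<Sum>i\<in>T. (- c i) *\<^sub>R V i)"
    using TU by (intro sum.cong) (auto simp: nu_def)
  also have "\<dots> = - w" unfolding c by (simp add: sum_negf)
  also have "(\<Sum>i\<in>U. nu i *\<^sub>R V i) = w" unfolding w_def by (intro sum.cong) (auto simp: nu_def)
  finally have dnu: "isdep n V nu" unfolding isdep_def by simp
  have Tne: "T \<noteq> {}" using ne T_def by simp
  define eps where "eps = Min ((\<lambda>i. \<bar>lam i\<bar> / (\<bar>nu i\<bar> + 1)) ` T)"
  have eps_le: "eps \<le> \<bar>lam i\<bar> / (\<bar>nu i\<bar> + 1)" if "i \<in> T" for i
    unfolding eps_def using fin that by (intro Min_le) auto
  have eps_pos: "eps > 0" unfolding eps_def using fin Tne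
    by (subst Min_gr_iff) (auto simp: T_def supp_def)
  define mu where "mu = (\<lambda>i. lam i + eps * nu i)"
  have dmu: "isdep n V mu" unfolding mu_def by (rule isdep_lin[OF d dnu])
  have smallT: "\<bar>eps * nu i\<bar> < \<bar>lam i\<bar>" if "i \<in> T" for i
  proof -
    have "eps * (\<bar>nu i\<bar> + 1) \<le> \<bar>lam i\<bar>" using eps_le[OF that] by (simp add: le_divide_eq)
    thus ?thesis using eps_pos by (simp add: abs_mult algebra_simps)
  qed
  have Fmu: "F = sv n mu"
  proof
    fix i
    show "F i = sv n mu i"
    proof (cases "i < n")
      case False thus ?thesis using F2 by (simp add: sv_def)
    next
      case True
      show ?thesis
      proof (cases "i \<in> T")
        case True
        hence "sgn (mu i) = sgn (lam i)" unfolding mu_def by (rule sgn_small[OF smallT])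
        thus ?thesis using conf \<open>i < n\<close> True by (simp add: sv_def T_def supp_def)
      next
        case nT: False
        show ?thesis
        proof (cases "i \<in> U")
          case True
          hence "lam i = 0" "F i \<noteq> 0" unfolding U_def by auto
          hence "mu i = eps * F i" unfolding mu_def nu_def using True by simp
          moreover have "F i = 1 \<or> F i = -1" using F1 \<open>i < n\<close> \<open>F i \<noteq> 0\<close> by auto
          ultimately show ?thesis using eps_pos \<open>i<n\<close> by (auto simp: sv_def sgn_mult)
        next
          case False
          hence "lam i = 0" "F i = 0" using nT \<open>i<n\<close> conf unfolding T_def U_def supp_def by auto
          thus ?thesis using nT False \<open>i<n\<close> unfolding sv_def mu_def nu_def by simp
        qed
      qed
    qed
  qed
  obtain i0 where i0: "i0 \<in> T" using Tne by blast
  have "sgn (mu i0) = sgn (lam i0)" unfolding mu_def by (rule sgn_small[OF smallT[OF i0]])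
  hence "mu i0 \<noteq> 0" using i0 by (auto simp: T_def supp_def sgn_zero_iff)
  hence "supp n mu \<noteq> {}" using i0 Tn unfolding supp_def by auto
  thus ?thesis unfolding dep_patterns_iff using dmu Fmu by blast
qed

lemma dep_on_set:
  assumes gp: "gen_pos n (V::nat \<Rightarrow> real^'r)" and rn: "CARD('r) \<le> n"
    and S: "S \<subseteq> {..<n}" "card S = CARD('r) + 1" and c: "c \<in> S"
  shows "\<exists>nu. isdep n V nu \<and> nu c = 1 \<and> (\<forall>i. i \<notin> S \<longrightarrow> nu i = 0)"
proof -
  have fS: "finite S" using S(1) finite_subset by blast
  have cS: "card (S - {c}) = CARD('r)" using S(2) c fS by simp
  have Sc: "S - {c} \<subseteq> {..<n}" using S(1) by auto
  obtain x where x: "- V c = (\<Sum>i\<in>S - {c}. x i *\<^sub>R V i)"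
    using gp_span[OF gp Sc cS[symmetric, THEN eq_refl], of "- V c"] by blast
  define nu where "nu = (\<lambda>i. if i = c then 1 else if i \<in> S then x i else 0)"
  have "(\<Sum>i<n. nu i *\<^sub>R V i) = (\<Sum>i\<in>S. nu i *\<^sub>R V i)"
    using S(1) c by (intro sum.mono_neutral_right) (auto simp: nu_def)
  also have "\<dots> = nu c *\<^sub>R V c + (\<Sum>i\<in>S - {c}. nu i *\<^sub>R V i)"
    using fS c by (simp add: sum.remove)
  also have "(\<Sum>i\<in>S - {c}. nu i *\<^sub>R V i) = (\<Sum>i\<in>S - {c}. x i *\<^sub>R V i)"
    by (intro sum.cong) (auto simp: nu_def)
  also have "nu c *\<^sub>R V c + (\<Sum>i\<in>S - {c}. x i *\<^sub>R V i) = 0" unfolding x[symmetric] by (simp add: nu_def)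
  finally have "isdep n V nu" unfolding isdep_def .
  moreover have "nu c = 1" "\<forall>i. i \<notin> S \<longrightarrow> nu i = 0" using c by (auto simp: nu_def)
  ultimately show ?thesis by blast
qed

lemma circuit_below:
  assumes gp: "gen_pos n (V::nat \<Rightarrow> real^'r)" and rn: "CARD('r) \<le> n"
  shows "isdep n V lam \<Longrightarrow> supp n lam \<noteq> {} \<Longrightarrow>
    \<exists>mu. isdep n V mu \<and> card (supp n mu) = CARD('r) + 1 \<and> supp n mu \<subseteq> supp n lam \<and>
         (\<forall>i<n. mu i \<noteq> 0 \<longrightarrow> sgn (mu i) = sgn (lam i))"
proof (induction "card (supp n lam)" arbitrary: lam rule: less_induct)
  case less
  note d = less.prems(1) and ne = less.prems(2)
  have ge: "CARD('r) + 1 \<le> card (supp n lam)" by (rule supp_card[OF gp rn d ne])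
  show ?case
  proof (cases "card (supp n lam) = CARD('r) + 1")
    case True thus ?thesis using d by blast
  next
    case False
    hence gt: "CARD('r) + 1 < card (supp n lam)" using ge by simp
    obtain S where S: "S \<subseteq> supp n lam" "card S = CARD('r) + 1" "finite S"
      using obtain_subset_with_card_n[of "CARD('r) + 1" "supp n lam"] gt by auto
    have "S \<noteq> {}" using S(2) by auto
    then obtain c where c: "c \<in> S" by blast
    have Sn: "S \<subseteq> {..<n}" using S(1) supp_sub by blast
    obtain nu0 where nu0: "isdep n V nu0" "nu0 c = 1" "\<forall>i. i \<notin> S \<longrightarrow> nu0 i = 0"
      using dep_on_set[OF gp rn Sn S(2) c] by blast
    have lc: "lam c \<noteq> 0" using c S(1) by (auto simp: supp_def)
    define s where "s = (if lam c > 0 then 1 else -1 :: real)"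
    define nu where "nu = (\<lambda>i. s * nu0 i)"
    have dnu: "isdep n V nu" using isdep_lin[OF _ nu0(1), of "\<lambda>i. 0" s] unfolding nu_def
      by (simp add: isdep_def)
    have nuS: "\<forall>i. i \<notin> S \<longrightarrow> nu i = 0" using nu0(3) by (simp add: nu_def)
    define K where "K = {i \<in> S. nu i * lam i > 0}"
    have cK: "c \<in> K" unfolding K_def nu_def s_def using c nu0(2) lc
      by (auto simp: mult_neg_neg)
    have fK: "finite K" using S(3) K_def by simp
    define th where "th = Min ((\<lambda>i. lam i / nu i) ` K)"
    have "th \<in> (\<lambda>i. lam i / nu i) ` K" unfolding th_def using fK cK by (intro Min_in) auto
    then obtain i0 where i0: "i0 \<in> K" "th = lam i0 / nu i0" by blast
    have th_le: "th \<le> lam i / nu i" if "i \<in> K" for i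
      unfolding th_def using fK that by (intro Min_le) auto
    have pos: "lam i / nu i > 0" if "i \<in> K" for i
    proof -
      have "nu i * lam i > 0" using that K_def by simp
      thus ?thesis by (simp add: zero_less_divide_iff zero_less_mult_iff) linarith
    qed
    have thpos: "th > 0" using pos i0 by simp
    define mu where "mu = (\<lambda>i. lam i + (- th) * nu i)"
    have dmu: "isdep n V mu" unfolding mu_def by (rule isdep_lin[OF d dnu])
    have conf: "mu i \<noteq> 0 \<longrightarrow> sgn (mu i) = sgn (lam i)" for i
    proof (cases "i \<in> K")
      case True
      hence tl: "th \<le> lam i / nu i" and pr: "nu i * lam i > 0" using th_le K_def by auto
      show ?thesis
      proof (cases "nu i > 0")
        case True
        hence "lam i > 0" using pr by (simp add: zero_less_mult_iff)
        have "th * nu i \<le> lam i" using tl True by (simp add: le_divide_eq)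
        hence "mu i \<ge> 0" unfolding mu_def by simp
        thus ?thesis using \<open>lam i > 0\<close> by (auto simp: sgn_if)
      next
        case False
        hence "nu i < 0" using pr by (cases "nu i = 0") auto
        hence "lam i < 0" using pr by (simp add: zero_less_mult_iff)
        have "th * nu i \<ge> lam i" using tl \<open>nu i < 0\<close> by (simp add: le_divide_eq)
        hence "mu i \<le> 0" unfolding mu_def by simp
        thus ?thesis using \<open>lam i < 0\<close> by (auto simp: sgn_if)
      qed
    next
      case False
      show ?thesis
      proof (cases "i \<in> S")
        case iS: True
        hence "lam i \<noteq> 0" using S(1) by (auto simp: supp_def)
        moreover have "nu i * lam i \<le> 0" using False iS K_def by auto
        ultimately have "sgn (lam i + (- th) * nu i) = sgn (lam i)"
        proof (cases "lam i > 0")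
          case True
          hence "nu i \<le> 0" using \<open>nu i * lam i \<le> 0\<close> by (simp add: mult_le_0_iff)
          hence "th * nu i \<le> 0" using thpos by (simp add: mult_nonneg_nonpos)
          thus ?thesis using True by (simp add: sgn_if)
        next
          case False
          hence "lam i < 0" using \<open>lam i \<noteq> 0\<close> by simp
          hence "nu i \<ge> 0" using \<open>nu i * lam i \<le> 0\<close> by (simp add: mult_le_0_iff)
          hence "th * nu i \<ge> 0" using thpos by simp
          thus ?thesis using \<open>lam i < 0\<close> by (simp add: sgn_if)
        qed
        thus ?thesis unfolding mu_def by simp
      next
        case False thus ?thesis using nuS by (simp add: mu_def)
      qed
    qed
    have mui0: "mu i0 = 0" unfolding mu_def using i0 pos[OF i0(1)]
      by (auto simp: field_simps)
    have suppmu: "supp n mu \<subseteq> supp n lam - {i0}"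
    proof
      fix i assume "i \<in> supp n mu"
      hence "i < n" "mu i \<noteq> 0" by (simp_all add: supp_def)
      hence "lam i \<noteq> 0" using conf[of i] by (auto simp: sgn_zero_iff)
      thus "i \<in> supp n lam - {i0}" using \<open>i < n\<close> \<open>mu i \<noteq> 0\<close> mui0 by (auto simp: supp_def)
    qed
    have "i0 \<in> supp n lam" using i0(1) K_def S(1) by auto
    hence "supp n mu \<subset> supp n lam" using suppmu by blast
    hence lt: "card (supp n mu) < card (supp n lam)" by (rule psubset_card_mono[OF finite_supp])
    have "card S < card (supp n lam)" using S(2) gt by simp
    hence "\<not> supp n lam \<subseteq> S" using card_mono[OF S(3)] by (meson not_le)
    then obtain j where j: "j \<in> supp n lam" "j \<notin> S" by blast
    have "mu j = lam j" using nuS j(2) by (simp add: mu_def)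
    hence mune: "supp n mu \<noteq> {}" using j(1) unfolding supp_def by auto
    obtain mu' where mu': "isdep n V mu'" "card (supp n mu') = CARD('r) + 1"
        "supp n mu' \<subseteq> supp n mu" "\<forall>i<n. mu' i \<noteq> 0 \<longrightarrow> sgn (mu' i) = sgn (mu i)"
      using less.hyps[OF lt dmu mune] by blast
    have "\<forall>i<n. mu' i \<noteq> 0 \<longrightarrow> sgn (mu' i) = sgn (lam i)"
    proof (intro allI impI)
      fix i assume "i < n" "mu' i \<noteq> 0"
      hence "sgn (mu i) = sgn (mu' i)" using mu'(4) by simp
      hence "sgn (mu i) \<noteq> 0" using \<open>mu' i \<noteq> 0\<close> by (simp add: sgn_zero_iff)
      hence "mu i \<noteq> 0" by (simp add: sgn_zero_iff)
      thus "sgn (mu' i) = sgn (lam i)" using mu'(4) conf \<open>i < n\<close> \<open>mu' i \<noteq> 0\<close> by simp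
    qed
    thus ?thesis using mu' suppmu by blast
  qed
qed

definition cdep :: "(nat \<Rightarrow> real^'r) \<Rightarrow> ('r \<Rightarrow> nat) \<Rightarrow> nat \<Rightarrow> nat \<Rightarrow> real" where
  "cdep V e b i = (if i = b then -1 else if i \<in> range e
      then det (Mat V (e(inv e i := b))) / det (Mat V e) else 0)"

lemma Mat_upd: "(\<chi> i j. if j = k then V b $ i else Mat V e $ i $ j) = Mat V (e(k := b))"
  by (simp add: Mat_def vec_eq_iff)
lemma cdep_dep:
  assumes inj: "inj e" and en: "range e \<subseteq> {..<n}" and bn: "b < n" and be: "b \<notin> range e"
    and d: "det (Mat V e) \<noteq> 0"
  shows "isdep n V (cdep V e b)"
proof -
  define x where "x = (\<chi> k. det (Mat V (e(k := b))) / det (Mat V e))"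
  have "Mat V e *v x = V b" using cramer[OF d, of x "V b"] unfolding x_def Mat_upd by simp
  hence sx: "(\<Sum>j\<in>UNIV. x$j *\<^sub>R V (e j)) = V b" by (simp add: Mat_mult)
  have fe: "finite (range e)" by simp
  have "(\<Sum>i<n. cdep V e b i *\<^sub>R V i) = (\<Sum>i\<in>insert b (range e). cdep V e b i *\<^sub>R V i)"
    using en bn by (intro sum.mono_neutral_right) (auto simp: cdep_def)
  also have "\<dots> = cdep V e b b *\<^sub>R V b + (\<Sum>i\<in>range e. cdep V e b i *\<^sub>R V i)"
    using be fe by simp
  also have "(\<Sum>i\<in>range e. cdep V e b i *\<^sub>R V i) = (\<Sum>j\<in>UNIV. cdep V e b (e j) *\<^sub>R V (e j))"
    by (simp add: sum.reindex[OF inj])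
  also have "\<dots> = (\<Sum>j\<in>UNIV. x$j *\<^sub>R V (e j))"
  proof (intro sum.cong refl)
    fix j
    have "e j \<noteq> b" using be by auto
    thus "cdep V e b (e j) *\<^sub>R V (e j) = x$j *\<^sub>R V (e j)"
      by (simp add: cdep_def x_def inv_f_f[OF inj])
  qed
  finally show ?thesis unfolding isdep_def using sx by (simp add: cdep_def)
qed

lemma cont_det:
  assumes c: "\<forall>i<n. continuous_on D (\<lambda>t. P t i)" and en: "range e \<subseteq> {..<n}"
  shows "continuous_on D (\<lambda>t. det (Mat (P t) e :: real^'r^'r))"
proof -
  have ce: "continuous_on D (\<lambda>t. P t (e j) $ i)" for i j
    using c en by (intro continuous_on_component) auto
  show ?thesis unfolding det_def Mat_def vec_lambda_beta
    by (intro continuous_intros ce)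
qed

lemma cont_cdep:
  assumes c: "\<forall>i<n. continuous_on D (\<lambda>t. P t i)" and en: "range e \<subseteq> {..<n}" and bn: "b < n"
    and d: "\<forall>t\<in>D. det (Mat (P t) e) \<noteq> 0"
  shows "continuous_on D (\<lambda>t. cdep (P t) e b i)"
proof -
  have en': "range (e(k := b)) \<subseteq> {..<n}" for k using en bn by auto
  have "continuous_on D (\<lambda>t. det (Mat (P t) (e(inv e i := b))) / det (Mat (P t) e))"
    by (intro continuous_on_divide cont_det[OF c en] cont_det[OF c en'] ballI d[rule_format])
  thus ?thesis unfolding cdep_def by (cases "i = b"; cases "i \<in> range e") (simp_all add: continuous_on_const)
qed



lemma sgn_const_aux:
  fixes f :: "real \<Rightarrow> real"
  assumes c: "continuous_on {a..b} f" and nz: "\<forall>t\<in>{a..b}. f t \<noteq> 0"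
    and st: "s \<le> t" "a \<le> s" "t \<le> b"
  shows "sgn (f s) = sgn (f t)"
proof (rule ccontr)
  assume ne: "sgn (f s) \<noteq> sgn (f t)"
  have sub: "{s..t} \<subseteq> {a..b}" using st by auto
  have cst: "continuous_on {s..t} f" using continuous_on_subset[OF c sub] .
  have fs: "f s \<noteq> 0" "f t \<noteq> 0" using nz st by auto
  have "\<exists>x. s \<le> x \<and> x \<le> t \<and> f x = 0"
  proof (cases "f s < 0")
    case True
    hence "f t > 0" using ne fs by (simp add: sgn_if) (metis linorder_neqE_linordered_idom)
    thus ?thesis using IVT'[of f s 0 t, OF _ _ st(1) cst] True by simp
  next
    case False
    hence "f s > 0" "f t < 0" using ne fs by (simp_all add: sgn_if) (metis linorder_neqE_linordered_idom)+
    thus ?thesis using IVT2'[of f t 0 s, OF _ _ st(1) cst] by simp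
  qed
  then obtain x where "s \<le> x" "x \<le> t" "f x = 0" by blast
  thus False using nz st by auto
qed

lemma sgn_const:
  fixes f :: "real \<Rightarrow> real"
  assumes c: "continuous_on {a..b} f" and nz: "\<forall>t\<in>{a..b}. f t \<noteq> 0"
    and s: "s \<in> {a..b}" and t: "t \<in> {a..b}"
  shows "sgn (f s) = sgn (f t)"
proof (cases "s \<le> t")
  case True thus ?thesis using sgn_const_aux[OF c nz True] s t by simp
next
  case False thus ?thesis using sgn_const_aux[OF c nz, of t s] s t by simp
qed

definition SpecP :: "nat set \<Rightarrow> nat \<Rightarrow> (nat \<Rightarrow> real) \<Rightarrow> (nat \<Rightarrow> real) set" where
  "SpecP R n Z = {F. (\<forall>i\<in>R. F i = Z i) \<and> (\<forall>i<n. i \<notin> R \<longrightarrow> F i = 0 \<or> F i = Z i) \<and>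
     (\<forall>i. n \<le> i \<longrightarrow> F i = 0) \<and> (\<exists>i<n. i \<notin> R \<and> F i \<noteq> 0)}"

lemma dep_unique:
  assumes ci: "cols_indep V (S - {b})" and S: "S \<subseteq> {..<n}" and b: "b \<in> S"
    and dl: "isdep n V lam" and dk: "isdep n V k" and kb: "k b \<noteq> 0"
    and out: "\<forall>i<n. i \<notin> S \<longrightarrow> lam i = 0 \<and> k i = 0"
  shows "\<forall>i<n. lam i = (lam b / k b) * k i"
proof -
  define d where "d = (\<lambda>i. lam i + (- (lam b / k b)) * k i)"
  have dd: "isdep n V d" unfolding d_def by (rule isdep_lin[OF dl dk])
  have Sb: "S - {b} \<subseteq> {..<n}" using S by auto
  have "\<forall>i<n. i \<notin> S - {b} \<longrightarrow> d i = 0" using out kb by (auto simp: d_def)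
  hence z: "\<forall>i\<in>S - {b}. d i = 0" using indep_zero[OF ci Sb dd[unfolded isdep_def]] by blast
  show ?thesis
  proof (intro allI impI)
    fix i assume "i < n"
    have "d i = 0"
    proof (cases "i \<in> S - {b}")
      case True thus ?thesis using z by blast
    next
      case False thus ?thesis using out \<open>i < n\<close> kb by (auto simp: d_def)
    qed
    thus "lam i = (lam b / k b) * k i" unfolding d_def by simp
  qed
qed

lemma orth:
  assumes d: "isdep n V lam" and ne: "supp n lam \<noteq> {}" and s: "s = 1 \<or> s = (-1::real)"
    and sg: "\<forall>i<n. lam i \<noteq> 0 \<longrightarrow> sgn (lam i) = s * sgn (V i \<bullet> u)"
  shows False
proof -
  have "(\<Sum>i<n. lam i *\<^sub>R V i) \<bullet> u = 0" using d unfolding isdep_def by simp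
  hence "(\<Sum>i<n. s * (lam i * (V i \<bullet> u))) = 0"
    by (simp add: inner_sum_left sum_distrib_left[symmetric])
  moreover have pos: "s * (lam i * (V i \<bullet> u)) > 0" if "i < n" "lam i \<noteq> 0" for i
  proof -
    have e: "sgn (lam i) = s * sgn (V i \<bullet> u)" using sg that by blast
    have "sgn (s * (lam i * (V i \<bullet> u))) = s * (s * sgn (V i \<bullet> u)) * sgn (V i \<bullet> u)"
      using s e by (auto simp: sgn_mult)
    also have "\<dots> = sgn (V i \<bullet> u) * sgn (V i \<bullet> u)" using s by auto
    also have "\<dots> = 1" using e that by (auto simp: sgn_if split: if_splits)
    finally show ?thesis by (simp add: sgn_1_pos)
  qed
  moreover have nn: "s * (lam i * (V i \<bullet> u)) \<ge> 0" if "i < n" for i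
    using pos[OF that] by (cases "lam i = 0") auto
  moreover obtain i where "i \<in> supp n lam" using ne by blast
  hence "i < n" "lam i \<noteq> 0" by (auto simp: supp_def)
  ultimately have "(\<Sum>i<n. s * (lam i * (V i \<bullet> u))) > 0"
    by (intro sum_pos2[of "{..<n}" i]) auto
  thus False using \<open>(\<Sum>i<n. s * (lam i * (V i \<bullet> u))) = 0\<close> by simp
qed

definition circs :: "nat \<Rightarrow> (nat \<Rightarrow> real^'r) \<Rightarrow> nat set \<Rightarrow> (nat \<Rightarrow> real) \<Rightarrow> (nat \<Rightarrow> real) \<Rightarrow> bool" where
  "circs n X R rho del \<longleftrightarrow> (\<forall>a. a < n \<and> a \<notin> R \<longrightarrow> (\<exists>k. isdep n X k \<and>
      (\<forall>i<n. i \<notin> insert a R \<longrightarrow> k i = 0) \<and> (\<forall>i\<in>R. sgn (k i) = rho i) \<and> sgn (k a) = del a))"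

definition zv :: "nat set \<Rightarrow> nat \<Rightarrow> (nat \<Rightarrow> real) \<Rightarrow> (nat \<Rightarrow> real) \<Rightarrow> nat \<Rightarrow> real" where
  "zv R n rho del = (\<lambda>i. if i \<in> R then rho i else if i < n then del i else 0)"

definition pm :: "nat set \<Rightarrow> nat \<Rightarrow> (nat \<Rightarrow> real) \<Rightarrow> (nat \<Rightarrow> real) \<Rightarrow> bool" where
  "pm R n rho del \<longleftrightarrow> (\<forall>i\<in>R. rho i = 1 \<or> rho i = -1) \<and> (\<forall>a<n. a \<notin> R \<longrightarrow> del a = 1 \<or> del a = -1)"

lemma cov_constr:
  assumes gp: "gen_pos n (X::nat \<Rightarrow> real^'r)" and R: "R \<subseteq> {..<n}" "card R = CARD('r)"
    and pm: "pm R n rho del" and H: "circs n X R rho del"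
  shows "\<exists>u. u \<noteq> 0 \<and> (\<forall>i\<in>R. sgn (X i \<bullet> u) = rho i) \<and> (\<forall>a. a < n \<and> a \<notin> R \<longrightarrow> sgn (X a \<bullet> u) = - del a)"
proof -
  have fR: "finite R" using R(1) finite_subset by blast
  obtain e where e: "bij_betw e (UNIV::'r set) R" using ex_enum[OF fR R(2)] by blast
  have inj: "inj e" using e by (rule bij_betw_imp_inj_on)
  have Re: "R = range e" using e by (simp add: bij_betw_imp_surj_on)
  have "cols_indep X R" using gp R unfolding gen_pos_def by blast
  hence "det (Mat X e) \<noteq> 0" using indep_det[OF e] by blast
  hence "det (transpose (Mat X e)) \<noteq> 0" by (simp add: det_transpose)
  hence "invertible (transpose (Mat X e))" by (simp add: invertible_det_nz)
  then obtain B where "transpose (Mat X e) ** B = mat 1" unfolding invertible_def by blast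
  hence "transpose (Mat X e) *v (B *v (\<chi> j. rho (e j))) = (\<chi> j. rho (e j))"
    by (simp add: matrix_vector_mul_assoc)
  then obtain u where u: "transpose (Mat X e) *v u = (\<chi> j. rho (e j))" by blast
  have uR: "X i \<bullet> u = rho i" if iR: "i \<in> R" for i
  proof -
    obtain j where j: "i = e j" using iR Re by blast
    have "(transpose (Mat X e) *v u) $ j = X (e j) \<bullet> u"
      by (simp add: matrix_vector_mult_def transpose_def Mat_def inner_vec_def)
    thus ?thesis using u j by simp
  qed
  have Rne: "R \<noteq> {}" using Re by auto
  then obtain i0 where i0: "i0 \<in> R" by blast
  have rho_nz: "rho i \<noteq> 0" if "i \<in> R" for i using pm that unfolding pm_def by force
  have "u \<noteq> 0" using uR[OF i0] rho_nz[OF i0] by auto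
  moreover have "sgn (X i \<bullet> u) = rho i" if "i \<in> R" for i
    using uR[OF that] pm that unfolding pm_def by force
  moreover have "sgn (X a \<bullet> u) = - del a" if a: "a < n" "a \<notin> R" for a
  proof -
    obtain k where k: "isdep n X k" "\<forall>i<n. i \<notin> insert a R \<longrightarrow> k i = 0"
        "\<forall>i\<in>R. sgn (k i) = rho i" "sgn (k a) = del a"
      using H a unfolding circs_def by blast
    have "(\<Sum>i<n. k i *\<^sub>R X i) \<bullet> u = 0" using k(1) unfolding isdep_def by simp
    hence "(\<Sum>i<n. k i * (X i \<bullet> u)) = 0" by (simp add: inner_sum_left)
    moreover have "(\<Sum>i<n. k i * (X i \<bullet> u)) = (\<Sum>i\<in>insert a R. k i * (X i \<bullet> u))"
      using k(2) R(1) a by (intro sum.mono_neutral_right) auto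
    moreover have "\<dots> = k a * (X a \<bullet> u) + (\<Sum>i\<in>R. k i * rho i)"
      using a fR uR by (simp add: sum.insert)
    moreover have "(\<Sum>i\<in>R. k i * rho i) > 0"
    proof (rule sum_pos2[OF fR i0])
      have "k i * rho i = \<bar>k i\<bar>" if "i \<in> R" for i
      proof -
        have "rho i = sgn (k i)" using k(3) that by simp
        thus ?thesis by (simp add: abs_sgn)
      qed
      moreover have "k i \<noteq> 0" if "i \<in> R" for i
        using k(3) rho_nz that by (metis sgn_zero)
      ultimately show "0 < k i0 * rho i0" "\<And>i. i \<in> R \<Longrightarrow> 0 \<le> k i * rho i" using i0 by auto
    qed
    ultimately have neg: "k a * (X a \<bullet> u) < 0" by linarith
    have "del a = 1 \<or> del a = -1" using pm a unfolding pm_def by blast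
    thus ?thesis using neg k(4)
      by (auto simp: sgn_if mult_less_0_iff split: if_splits)
  qed
  ultimately show ?thesis by blast
qed

lemma isdep_scale: "isdep n V k \<Longrightarrow> isdep n V (\<lambda>i. c * k i)"
  using isdep_lin[of n V "\<lambda>i. 0" k c] by (simp add: isdep_def)

lemma sv_vals: "\<forall>i<n. sv n lam i \<in> {-1,0,1}" "\<forall>i\<ge>n. sv n lam i = 0"
  by (auto simp: sv_def sgn_if)

lemma pm_s: "s = 1 \<or> s = (-1::real) \<Longrightarrow> x = 1 \<or> x = -1 \<Longrightarrow> s * x = 1 \<or> s * x = -1"
  by auto

lemma spec_in:
  assumes gp: "gen_pos n (X::nat \<Rightarrow> real^'r)" and rn: "CARD('r) \<le> n" and R: "R \<subseteq> {..<n}"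
    and pm: "pm R n rho del" and H: "circs n X R rho del" and s: "s = 1 \<or> s = (-1::real)"
  shows "SpecP R n (\<lambda>i. s * zv R n rho del i) \<subseteq> dep_patterns n X"
proof
  fix F assume F: "F \<in> SpecP R n (\<lambda>i. s * zv R n rho del i)"
  then obtain a where a: "a < n" "a \<notin> R" "F a \<noteq> 0" unfolding SpecP_def by blast
  hence Fa: "F a = s * del a" using F unfolding SpecP_def zv_def by auto
  obtain k where k: "isdep n X k" "\<forall>i<n. i \<notin> insert a R \<longrightarrow> k i = 0"
      "\<forall>i\<in>R. sgn (k i) = rho i" "sgn (k a) = del a"
    using H a unfolding circs_def by blast
  have dl: "isdep n X (\<lambda>i. s * k i)" by (rule isdep_scale[OF k(1)])
  have "del a \<noteq> 0" using pm a unfolding pm_def by auto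
  hence "k a \<noteq> 0" using k(4) by auto
  hence ne: "supp n (\<lambda>i. s * k i) \<noteq> {}" using a s unfolding supp_def by auto
  have F1: "\<forall>i<n. F i \<in> {-1,0,1}"
  proof (intro allI impI)
    fix i assume "i < n"
    show "F i \<in> {-1,0,1}"
    proof (cases "i \<in> R")
      case True
      hence "F i = s * rho i" using F unfolding SpecP_def zv_def by auto
      thus ?thesis using pm_s[OF s] pm True unfolding pm_def by fastforce
    next
      case False
      hence "F i = 0 \<or> F i = s * del i" using F \<open>i < n\<close> unfolding SpecP_def zv_def by auto
      thus ?thesis using pm_s[OF s] pm False \<open>i < n\<close> unfolding pm_def by fastforce
    qed
  qed
  have F2: "\<forall>i\<ge>n. F i = 0" using F unfolding SpecP_def by auto
  have conf: "\<forall>i<n. s * k i \<noteq> 0 \<longrightarrow> F i = sgn (s * k i)"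
  proof (intro allI impI)
    fix i assume i: "i < n" "s * k i \<noteq> 0"
    hence "i \<in> insert a R" using k(2) by auto
    moreover have "sgn s = s" using s by auto
    ultimately show "F i = sgn (s * k i)" using F Fa k(3,4) unfolding SpecP_def zv_def
      by (auto simp: sgn_mult)
  qed
  show "F \<in> dep_patterns n X" by (rule dep_up[OF gp rn dl ne F1 F2 conf])
qed

lemma spec_out:
  assumes u: "\<forall>i<n. sgn (Y i \<bullet> u) = zv R n rho del i" and s: "s = 1 \<or> s = (-1::real)"
    and F: "F \<in> SpecP R n (\<lambda>i. s * zv R n rho del i)"
  shows "F \<notin> dep_patterns n Y"
proof
  assume "F \<in> dep_patterns n Y"
  then obtain lam where l: "supp n lam \<noteq> {}" "isdep n Y lam" "F = sv n lam"
    unfolding dep_patterns_iff by blast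
  have "\<forall>i<n. lam i \<noteq> 0 \<longrightarrow> sgn (lam i) = s * sgn (Y i \<bullet> u)"
  proof (intro allI impI)
    fix i assume i: "i < n" "lam i \<noteq> 0"
    hence Fi: "F i = sgn (lam i)" "F i \<noteq> 0" using l(3) by (auto simp: sv_def sgn_zero_iff)
    have "F i = s * zv R n rho del i" using F Fi(2) i(1) unfolding SpecP_def
      by (cases "i \<in> R") auto
    thus "sgn (lam i) = s * sgn (Y i \<bullet> u)" using Fi u i by simp
  qed
  thus False using orth[OF l(2) l(1) s] by blast
qed

lemma diff_sub:
  assumes gpX: "gen_pos n (X::nat \<Rightarrow> real^'r)" and gpY: "gen_pos n (Y::nat \<Rightarrow> real^'r)"
    and rn: "CARD('r) \<le> n" and R: "R \<subseteq> {..<n}" "card R = CARD('r)"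
    and pm: "pm R n rho del" and HX: "circs n X R rho del" and HY: "circs n Y R rho (\<lambda>i. - del i)"
    and HT: "\<forall>lam. isdep n X lam \<and> card (supp n lam) = CARD('r) + 1 \<and> \<not> R \<subseteq> supp n lam \<longrightarrow>
               (\<exists>mu. isdep n Y mu \<and> sv n mu = sv n lam)"
    and FX: "F \<in> dep_patterns n X" and FY: "F \<notin> dep_patterns n Y"
  shows "\<exists>s. (s = 1 \<or> s = (-1::real)) \<and> F \<in> SpecP R n (\<lambda>i. s * zv R n rho del i)"
proof -
  obtain lam where l: "supp n lam \<noteq> {}" "isdep n X lam" "F = sv n lam"
    using FX unfolding dep_patterns_iff by blast
  obtain mu where mu: "isdep n X mu" "card (supp n mu) = CARD('r) + 1" "supp n mu \<subseteq> supp n lam"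
      "\<forall>i<n. mu i \<noteq> 0 \<longrightarrow> sgn (mu i) = sgn (lam i)"
    using circuit_below[OF gpX rn l(2) l(1)] by blast
  have F1: "\<forall>i<n. F i \<in> {-1,0,1}" and F2: "\<forall>i\<ge>n. F i = 0" using sv_vals l(3) by auto
  have Fmu: "\<forall>i<n. mu i \<noteq> 0 \<longrightarrow> F i = sgn (mu i)" using mu(4) l(3) by (simp add: sv_def)
  have mune: "supp n mu \<noteq> {}" using mu(2) by auto
  have RS: "R \<subseteq> supp n mu"
  proof (rule ccontr)
    assume "\<not> R \<subseteq> supp n mu"
    then obtain mu' where mu': "isdep n Y mu'" "sv n mu' = sv n mu" using HT mu(1,2) by blast
    have eq: "sgn (mu' i) = sgn (mu i)" if "i < n" for i
      using fun_cong[OF mu'(2), of i] that by (simp add: sv_def)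
    have nzeq: "mu' i \<noteq> 0 \<longleftrightarrow> mu i \<noteq> 0" if "i < n" for i
      using eq[OF that] by (metis sgn_zero_iff)
    have "supp n mu' = supp n mu" unfolding supp_def using nzeq by auto
    hence ne': "supp n mu' \<noteq> {}" using mune by simp
    have "\<forall>i<n. mu' i \<noteq> 0 \<longrightarrow> F i = sgn (mu' i)"
    proof (intro allI impI)
      fix i assume i: "i < n" "mu' i \<noteq> 0"
      hence "mu i \<noteq> 0" using nzeq by blast
      thus "F i = sgn (mu' i)" using Fmu eq i by simp
    qed
    hence "F \<in> dep_patterns n Y" by (rule dep_up[OF gpY rn mu'(1) ne' F1 F2])
    thus False using FY by blast
  qed
  have fR: "finite R" using R(1) finite_subset by blast
  have "card (supp n mu - R) = 1" using RS mu(2) R(2) fR by (simp add: card_Diff_subset)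
  then obtain a where a1: "supp n mu - R = {a}" by (rule card_1_singletonE)
  have aS: "supp n mu = insert a R" using a1 RS by blast
  have a: "a < n" "a \<notin> R" using a1 supp_sub by auto
  obtain k where k: "isdep n X k" "\<forall>i<n. i \<notin> insert a R \<longrightarrow> k i = 0"
      "\<forall>i\<in>R. sgn (k i) = rho i" "sgn (k a) = del a"
    using HX a unfolding circs_def by blast
  have "R \<noteq> {}" using R(2) by auto
  then obtain b where b: "b \<in> R" by blast
  have rho_nz: "rho i \<noteq> 0" if "i \<in> R" for i using pm that unfolding pm_def by force
  have kb: "k b \<noteq> 0" using k(3) b rho_nz[OF b] by (metis sgn_zero)
  have Sn: "insert a R \<subseteq> {..<n}" using a R(1) by auto
  have "card (insert a R - {b}) = CARD('r)" using a(2) b fR R(2) by simp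
  moreover have "insert a R - {b} \<subseteq> {..<n}" using Sn by auto
  ultimately have ci: "cols_indep X (insert a R - {b})" using gpX unfolding gen_pos_def by blast
  have out: "\<forall>i<n. i \<notin> insert a R \<longrightarrow> mu i = 0 \<and> k i = 0" using k(2) aS unfolding supp_def by auto
  define c where "c = mu b / k b"
  have muk: "\<forall>i<n. mu i = c * k i"
    using dep_unique[OF ci Sn _ mu(1) k(1) kb out] b unfolding c_def by blast
  have "mu b \<noteq> 0" using b RS unfolding supp_def by auto
  hence cnz: "c \<noteq> 0" using muk b R(1) by auto
  define s where "s = sgn c"
  have s: "s = 1 \<or> s = -1" using cnz unfolding s_def by (auto simp: sgn_if)
  have Fs: "F i = s * sgn (k i)" if "i \<in> insert a R" for i
  proof -
    have "i < n" using that Sn by auto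
    moreover have "mu i \<noteq> 0" using that aS unfolding supp_def by auto
    ultimately show ?thesis using Fmu muk unfolding s_def by (simp add: sgn_mult)
  qed
  have del_pm: "del i = 1 \<or> del i = -1" if "i < n" "i \<notin> R" for i using pm that unfolding pm_def by auto
  have mid: "\<forall>i<n. i \<notin> R \<longrightarrow> F i = 0 \<or> F i = s * zv R n rho del i"
  proof (intro allI impI, rule ccontr)
    fix c' assume c': "c' < n" "c' \<notin> R" "\<not> (F c' = 0 \<or> F c' = s * zv R n rho del c')"
    hence Fc: "F c' = - s * del c'" using F1 s del_pm[OF c'(1,2)] unfolding zv_def by auto
    obtain k' where k': "isdep n Y k'" "\<forall>i<n. i \<notin> insert c' R \<longrightarrow> k' i = 0"
        "\<forall>i\<in>R. sgn (k' i) = rho i" "sgn (k' c') = - del c'"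
      using HY c' unfolding circs_def by blast
    have dl: "isdep n Y (\<lambda>i. s * k' i)" by (rule isdep_scale[OF k'(1)])
    have "del c' \<noteq> 0" using del_pm[OF c'(1,2)] by auto
    hence "k' c' \<noteq> 0" using k'(4) by (metis neg_equal_0_iff_equal sgn_0)
    hence ne: "supp n (\<lambda>i. s * k' i) \<noteq> {}" using c' s unfolding supp_def by auto
    have sgs: "sgn s = s" using s by auto
    have conf: "\<forall>i<n. s * k' i \<noteq> 0 \<longrightarrow> F i = sgn (s * k' i)"
    proof (intro allI impI)
      fix i assume i: "i < n" "s * k' i \<noteq> 0"
      hence "i \<in> insert c' R" using k'(2) by auto
      thus "F i = sgn (s * k' i)"
      proof
        assume "i = c'" thus ?thesis using Fc k'(4) sgs by (simp add: sgn_mult)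
      next
        assume iR: "i \<in> R"
        thus ?thesis using Fs[of i] k(3) k'(3) sgs by (simp add: sgn_mult)
      qed
    qed
    have "F \<in> dep_patterns n Y" by (rule dep_up[OF gpY rn dl ne F1 F2 conf])
    thus False using FY by blast
  qed
  have "F \<in> SpecP R n (\<lambda>i. s * zv R n rho del i)"
    unfolding SpecP_def
  proof (intro CollectI conjI)
    show "\<forall>i\<in>R. F i = s * zv R n rho del i" using Fs k(3) unfolding zv_def by auto
    show "\<forall>i<n. i \<notin> R \<longrightarrow> F i = 0 \<or> F i = s * zv R n rho del i" by (rule mid)
    show "\<forall>i. n \<le> i \<longrightarrow> F i = 0" using F2 by auto
    have "F a = s * del a" using Fs[of a] k(4) by simp
    hence "F a \<noteq> 0" using s del_pm[OF a] by auto
    thus "\<exists>i<n. i \<notin> R \<and> F i \<noteq> 0" using a by blast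
  qed
  thus ?thesis using s by blast
qed

lemma det_enum_rel:
  assumes f: "bij_betw f (UNIV::'r::finite set) R" and e0: "bij_betw e0 (UNIV::'r set) R"
  shows "\<exists>c::real. (c = 1 \<or> c = -1) \<and> (\<forall>V. det (Mat V f) = c * det (Mat V e0))"
proof -
  define p where "p = inv_into UNIV e0 \<circ> f"
  have "bij_betw (inv_into UNIV e0) R UNIV" using e0 by (rule bij_betw_inv_into)
  hence "bij_betw p UNIV UNIV" unfolding p_def using f by (rule bij_betw_trans[rotated])
  hence pp: "p permutes (UNIV::'r set)" by (rule bij_imp_permutes) auto
  have fe: "e0 (p j) = f j" for j
  proof -
    have "f j \<in> R" using f by (auto simp: bij_betw_def)
    hence "f j \<in> e0 ` UNIV" using e0 by (simp add: bij_betw_def)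
    thus ?thesis unfolding p_def by (simp add: f_inv_into_f)
  qed
  have "Mat V f = (\<chi> i j. Mat V e0 $ i $ p j)" for V
    by (simp add: Mat_def vec_eq_iff fe)
  hence "det (Mat V f) = of_int (sign p) * det (Mat V e0)" for V
    using det_permute_columns[OF pp, of "Mat V e0"] by simp
  moreover have "of_int (sign p) = (1::real) \<or> of_int (sign p) = (-1::real)"
    by (cases p rule: sign_cases) auto
  ultimately show ?thesis by blast
qed

locale mctx =
  fixes n :: nat and A B :: "nat \<Rightarrow> real^'r::finite" and P :: "real \<Rightarrow> nat \<Rightarrow> real^'r"
    and t0 :: real and R :: "nat set"
  assumes rn: "CARD('r) \<le> n" and gpA: "gen_pos n A" and gpB: "gen_pos n B"
    and cont: "\<forall>i<n. continuous_on {0..1} (\<lambda>t. P t i)"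
    and P0: "\<forall>i<n. P 0 i = A i" and P1: "\<forall>i<n. P 1 i = B i"
    and t0: "0 < t0" "t0 < 1"
    and gpt: "\<forall>t\<in>{0..1}. t \<noteq> t0 \<longrightarrow> gen_pos n (P t)"
    and R: "R \<subseteq> {..<n}" "card R = CARD('r)"
    and deg: "\<forall>S. S \<subseteq> {..<n} \<and> card S = CARD('r) \<longrightarrow> (\<not> cols_indep (P t0) S \<longleftrightarrow> S = R)"
    and sm: "\<forall>S. S \<subseteq> {..<n} \<and> card S = CARD('r) - 1 \<longrightarrow> cols_indep (P t0) S"
    and flip: "\<forall>s t. 0 \<le> s \<and> s < t0 \<and> t0 < t \<and> t \<le> 1 \<longrightarrow> sgn (det_cols (P s) R) \<noteq> sgn (det_cols (P t) R)"
begin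

lemma indep_t:
  assumes t: "t \<in> {0..1}" and S: "S \<subseteq> {..<n}" "card S = CARD('r)" "S \<noteq> R"
  shows "cols_indep (P t) S"
proof (cases "t = t0")
  case True thus ?thesis using deg S by blast
next
  case False thus ?thesis using gpt t S unfolding gen_pos_def by blast
qed

definition enum :: "nat set \<Rightarrow> 'r \<Rightarrow> nat" where
  "enum S = (SOME e. bij_betw e (UNIV::'r set) S)"

lemma enum_bij:
  assumes "S \<subseteq> {..<n}" "card S = CARD('r)"
  shows "bij_betw (enum S) UNIV S"
proof -
  have "finite S" using assms(1) finite_subset by blast
  thus ?thesis unfolding enum_def using ex_enum[of S] assms(2) by (metis someI_ex)
qed

definition lcf :: "nat set \<Rightarrow> nat \<Rightarrow> real \<Rightarrow> nat \<Rightarrow> real" where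
  "lcf S b t = cdep (P t) (enum (S - {b})) b"

context
  fixes S b
  assumes S: "S \<subseteq> {..<n}" "card S = CARD('r) + 1" and b: "b \<in> S" and SbR: "S - {b} \<noteq> R"
begin

lemma Sb: "S - {b} \<subseteq> {..<n}" "card (S - {b}) = CARD('r)"
  using S b by (auto simp: finite_subset)

lemma e_bij: "bij_betw (enum (S - {b})) UNIV (S - {b})" using enum_bij[OF Sb] .
lemma e_inj: "inj (enum (S - {b}))" using e_bij by (rule bij_betw_imp_inj_on)
lemma e_range: "range (enum (S - {b})) = S - {b}" using e_bij by (simp add: bij_betw_imp_surj_on)

lemma det_nz: "t \<in> {0..1} \<Longrightarrow> det (Mat (P t) (enum (S - {b}))) \<noteq> 0"
  using indep_t[OF _ Sb SbR] indep_det[OF e_bij] by blast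

lemma lcf_dep: "t \<in> {0..1} \<Longrightarrow> isdep n (P t) (lcf S b t)"
  unfolding lcf_def using e_inj e_range Sb(1) S b det_nz
  by (intro cdep_dep) auto

lemma lcf_cont: "continuous_on {0..1} (\<lambda>t. lcf S b t i)"
  unfolding lcf_def using cont e_range Sb(1) S b det_nz
  by (intro cont_cdep) auto

lemma lcf_b: "lcf S b t b = -1" by (simp add: lcf_def cdep_def)
lemma lcf_out: "i \<notin> S \<Longrightarrow> lcf S b t i = 0"
  using e_range b by (auto simp: lcf_def cdep_def)

lemma lcf_nz:
  assumes t: "t \<in> {0..1}" and i: "i \<in> S" "i \<noteq> b" and ci: "cols_indep (P t) (S - {i})"
  shows "lcf S b t i \<noteq> 0"
proof
  assume z: "lcf S b t i = 0"
  have Si: "S - {i} \<subseteq> {..<n}" using S by auto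
  have "\<forall>j<n. j \<notin> S - {i} \<longrightarrow> lcf S b t j = 0" using z lcf_out by auto
  hence "\<forall>j\<in>S - {i}. lcf S b t j = 0"
    using indep_zero[OF ci Si lcf_dep[OF t, unfolded isdep_def]] by blast
  hence "lcf S b t b = 0" using b i by blast
  thus False using lcf_b[of t] by simp
qed

lemma lcf_sgn_const:
  assumes i: "i \<in> S" "i \<noteq> b" "S - {i} \<noteq> R" and t: "t \<in> {0..1}" and t': "t' \<in> {0..1}"
  shows "sgn (lcf S b t i) = sgn (lcf S b t' i)"
proof -
  have "S - {i} \<subseteq> {..<n}" "card (S - {i}) = CARD('r)" using S i by (auto simp: finite_subset)
  hence "\<forall>s\<in>{0..1}. lcf S b s i \<noteq> 0" using lcf_nz i indep_t by blast
  thus ?thesis using sgn_const[OF lcf_cont _ t t'] by blast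
qed

end

end

context mctx begin

lemma transport:
  assumes t1: "t1 \<in> {0..1}" and t2: "t2 \<in> {0..1}"
    and X: "\<forall>i<n. P t1 i = X i" and Y: "\<forall>i<n. P t2 i = Y i" and gpX: "gen_pos n X"
    and l: "isdep n X lam" "card (supp n lam) = CARD('r) + 1" "\<not> R \<subseteq> supp n lam"
  shows "\<exists>mu. isdep n Y mu \<and> sv n mu = sv n lam"
proof -
  define S where "S = supp n lam"
  have S: "S \<subseteq> {..<n}" "card S = CARD('r) + 1" using l(2) supp_sub unfolding S_def by auto
  have "S \<noteq> {}" using S(2) by auto
  then obtain b where b: "b \<in> S" by blast
  have nR: "\<And>i. S - {i} \<noteq> R" using l(3) unfolding S_def by blast
  have sc: "sgn (lcf S b t1 i) = sgn (lcf S b t2 i)" for i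
  proof (cases "i \<in> S")
    case False thus ?thesis using lcf_out[OF S b nR] by simp
  next
    case True
    show ?thesis
    proof (cases "i = b")
      case True thus ?thesis using lcf_b[OF S b nR] by simp
    next
      case False show ?thesis using lcf_sgn_const[OF S b nR \<open>i \<in> S\<close> False nR t1 t2] .
    qed
  qed
  have d1: "isdep n X (lcf S b t1)" using isdep_cong[OF lcf_dep[OF S b nR t1] X] .
  have d2: "isdep n Y (lcf S b t2)" using isdep_cong[OF lcf_dep[OF S b nR t2] Y] .
  have "S - {b} \<subseteq> {..<n}" "card (S - {b}) = CARD('r)" using Sb[OF S b nR] by auto
  hence ci: "cols_indep X (S - {b})" using gpX unfolding gen_pos_def by blast
  have out: "\<forall>i<n. i \<notin> S \<longrightarrow> lam i = 0 \<and> lcf S b t1 i = 0"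
    using lcf_out[OF S b nR] unfolding S_def supp_def by auto
  have eq: "\<forall>i<n. lam i = (lam b / lcf S b t1 b) * lcf S b t1 i"
    by (rule dep_unique[OF ci S(1) b l(1) d1 _ out]) (simp add: lcf_b[OF S b nR])
  define mu where "mu = (\<lambda>i. (- lam b) * lcf S b t2 i)"
  have "isdep n Y mu" unfolding mu_def by (rule isdep_scale[OF d2])
  moreover have "sv n mu = sv n lam"
  proof
    fix i show "sv n mu i = sv n lam i"
    proof (cases "i < n")
      case True
      hence "lam i = (- lam b) * lcf S b t1 i" using eq lcf_b[OF S b nR] by simp
      thus ?thesis using True sc[of i] unfolding sv_def mu_def by (simp add: sgn_mult)
    qed (simp add: sv_def)
  qed
  ultimately show ?thesis by blast
qed

lemma HT_AB: "\<forall>lam. isdep n A lam \<and> card (supp n lam) = CARD('r) + 1 \<and> \<not> R \<subseteq> supp n lam \<longrightarrow>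
               (\<exists>mu. isdep n B mu \<and> sv n mu = sv n lam)"
  using transport[of 0 1 A B] P0 P1 gpA by auto

lemma HT_BA: "\<forall>lam. isdep n B lam \<and> card (supp n lam) = CARD('r) + 1 \<and> \<not> R \<subseteq> supp n lam \<longrightarrow>
               (\<exists>mu. isdep n A mu \<and> sv n mu = sv n lam)"
  using transport[of 1 0 B A] P0 P1 gpB by auto

end

lemma upd_bij:
  assumes e: "bij_betw e (UNIV::'r set) T" and a: "a \<in> T" and b: "b \<notin> T"
  shows "bij_betw (e(inv e a := b)) UNIV (insert b (T - {a}))"
proof -
  have inj: "inj e" using e by (rule bij_betw_imp_inj_on)
  have rng: "range e = T" using e by (simp add: bij_betw_imp_surj_on)
  have ea: "e (inv e a) = a" using a rng by (simp add: f_inv_into_f)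
  have "inj (e(inv e a := b))" using inj b rng by (intro inj_on_fun_updI) auto
  moreover have "(e(inv e a := b)) ` UNIV = insert b (T - {a})"
  proof -
    have "e ` (UNIV - {inv e a}) = T - {a}"
      using inj rng ea by (metis image_set_diff image_empty image_insert)
    thus ?thesis unfolding fun_upd_image by (simp only: UNIV_I if_True)
  qed
  ultimately show ?thesis by (simp add: bij_betw_def)
qed

context mctx begin

lemma det_cols_enum: "det_cols V R = det (Mat V (enum R))"
  unfolding det_cols_def enum_def Let_def Mat_def ..

definition bR :: nat where "bR = (SOME b. b \<in> R)"

lemma bR: "bR \<in> R"
proof -
  have "R \<noteq> {}" using R(2) by auto
  thus ?thesis unfolding bR_def by (simp add: some_in_eq)
qed

definition lca :: "nat \<Rightarrow> real \<Rightarrow> nat \<Rightarrow> real" where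
  "lca a = lcf (insert a R) bR"

context
  fixes a assumes a: "a < n" "a \<notin> R"
begin

lemma aS: "insert a R \<subseteq> {..<n}" "card (insert a R) = CARD('r) + 1" "bR \<in> insert a R"
    "insert a R - {bR} \<noteq> R"
proof -
  have fR: "finite R" using R(1) finite_subset by blast
  show "insert a R \<subseteq> {..<n}" using a R by auto
  show "card (insert a R) = CARD('r) + 1" using a fR R(2) by simp
  show "bR \<in> insert a R" using bR by simp
  show "insert a R - {bR} \<noteq> R" using a bR by auto
qed

lemma lca_dep: "t \<in> {0..1} \<Longrightarrow> isdep n (P t) (lca a t)"
  unfolding lca_def using lcf_dep[OF aS(1,2,3,4)] .

lemma lca_b: "lca a t bR = -1" unfolding lca_def using lcf_b[OF aS(1,2,3,4)] .

lemma lca_out: "i \<notin> insert a R \<Longrightarrow> lca a t i = 0" unfolding lca_def using lcf_out[OF aS(1,2,3,4)] .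

lemma lca_const:
  assumes i: "i \<in> R" "i \<noteq> bR" and t: "t \<in> {0..1}" and t': "t' \<in> {0..1}"
  shows "sgn (lca a t i) = sgn (lca a t' i)"
  unfolding lca_def using lcf_sgn_const[OF aS(1,2,3,4), of i t t'] i a t t' by auto

lemma lca_nzR:
  assumes i: "i \<in> R" and t: "t \<in> {0..1}"
  shows "lca a t i \<noteq> 0"
proof (cases "i = bR")
  case True thus ?thesis using lca_b by simp
next
  case False
  have "insert a R - {i} \<subseteq> {..<n}" "card (insert a R - {i}) = CARD('r)" "insert a R - {i} \<noteq> R"
    using aS(1,2) i a by auto
  hence "cols_indep (P t) (insert a R - {i})" using indep_t[OF t] by blast
  thus ?thesis unfolding lca_def using lcf_nz[OF aS(1,2,3,4) t _ False] i by auto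
qed

definition fa :: "'r \<Rightarrow> nat" where
  "fa = (enum (insert a R - {bR}))(inv (enum (insert a R - {bR})) a := bR)"

lemma fa_bij: "bij_betw fa UNIV R"
proof -
  have "insert bR (insert a R - {bR} - {a}) = R" using a bR by auto
  moreover have "bij_betw fa UNIV (insert bR (insert a R - {bR} - {a}))"
    unfolding fa_def using e_bij[OF aS(1,2,3,4)] a bR by (intro upd_bij) auto
  ultimately show ?thesis by simp
qed

lemma lca_a: "lca a t a = det (Mat (P t) fa) / det (Mat (P t) (enum (insert a R - {bR})))"
proof -
  have "a \<in> range (enum (insert a R - {bR}))" using e_range[OF aS(1,2,3,4)] a bR by auto
  moreover have "a \<noteq> bR" using a bR by auto
  ultimately show ?thesis unfolding lca_def lcf_def cdep_def fa_def by simp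
qed

lemma lca_t0: "lca a t0 a = 0"
proof -
  have "\<not> cols_indep (P t0) R" using deg R by blast
  hence "det (Mat (P t0) fa) = 0" using indep_det[OF fa_bij] by blast
  thus ?thesis using lca_a by simp
qed

lemma lca_flip: "lca a 0 a \<noteq> 0 \<and> sgn (lca a 1 a) = - sgn (lca a 0 a)"
proof -
  have eR: "bij_betw (enum R) UNIV R" using enum_bij[OF R] .
  obtain c :: real where c: "c = 1 \<or> c = -1" "\<forall>V. det (Mat V fa) = c * det (Mat V (enum R))"
    using det_enum_rel[OF fa_bij eR] by blast
  have fl: "sgn (det_cols (P 0) R) \<noteq> sgn (det_cols (P 1) R)" using flip t0 by auto
  have gp0: "gen_pos n (P 0)" and gp1: "gen_pos n (P 1)" using gpt t0 by auto
  have "cols_indep (P 0) R" "cols_indep (P 1) R" using gp0 gp1 R unfolding gen_pos_def by auto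
  hence nz: "det_cols (P 0) R \<noteq> 0" "det_cols (P 1) R \<noteq> 0"
    using indep_det[OF eR] det_cols_enum by auto
  have dc: "sgn (det_cols (P 1) R) = - sgn (det_cols (P 0) R)"
    using fl nz by (auto simp: sgn_if split: if_splits)
  let ?e = "enum (insert a R - {bR})"
  have dnz: "\<forall>t\<in>{0..1}. det (Mat (P t) ?e) \<noteq> 0" using det_nz[OF aS(1,2,3,4)] by blast
  have "range ?e \<subseteq> {..<n}" using e_range[OF aS(1,2,3,4)] aS(1) by auto
  hence cd: "continuous_on {0..1} (\<lambda>t. det (Mat (P t) ?e))" by (rule cont_det[OF cont])
  have den: "sgn (det (Mat (P 1) ?e)) = sgn (det (Mat (P 0) ?e))"
    using sgn_const[OF cd dnz] by simp
  have "lca a 0 a = c * det_cols (P 0) R / det (Mat (P 0) ?e)"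
    using lca_a c(2) det_cols_enum by simp
  moreover have "lca a 1 a = c * det_cols (P 1) R / det (Mat (P 1) ?e)"
    using lca_a c(2) det_cols_enum by simp
  ultimately show ?thesis using nz dnz c(1) den dc by (auto simp: sgn_mult)
qed

end

lemma lca_indep_a:
  assumes a: "a < n" "a \<notin> R" and a': "a' < n" "a' \<notin> R" and i: "i \<in> R"
  shows "lca a t0 i = lca a' t0 i"
proof -
  have t0i: "t0 \<in> {0..1}" using t0 by auto
  have "R - {bR} \<subseteq> {..<n}" "card (R - {bR}) = CARD('r) - 1" using R bR by (auto simp: finite_subset)
  hence ci: "cols_indep (P t0) (R - {bR})" using sm by blast
  have out: "\<forall>j<n. j \<notin> R \<longrightarrow> lca a t0 j = 0 \<and> lca a' t0 j = 0"
  proof (intro allI impI)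
    fix j assume "j < n" "j \<notin> R"
    have "lca a t0 j = 0"
    proof (cases "j = a")
      case True thus ?thesis using lca_t0[OF a] by simp
    next
      case False thus ?thesis using lca_out[OF a] \<open>j \<notin> R\<close> by simp
    qed
    moreover have "lca a' t0 j = 0"
    proof (cases "j = a'")
      case True thus ?thesis using lca_t0[OF a'] by simp
    next
      case False thus ?thesis using lca_out[OF a'] \<open>j \<notin> R\<close> by simp
    qed
    ultimately show "lca a t0 j = 0 \<and> lca a' t0 j = 0" by simp
  qed
  have "\<forall>j<n. lca a t0 j = (lca a t0 bR / lca a' t0 bR) * lca a' t0 j"
    by (rule dep_unique[OF ci R(1) bR lca_dep[OF a t0i] lca_dep[OF a' t0i] _ out])
       (simp add: lca_b[OF a'])
  thus ?thesis using i R(1) lca_b[OF a] lca_b[OF a'] by auto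
qed

end

context mctx begin

definition a0 :: nat where "a0 = (SOME a. a < n \<and> a \<notin> R)"
definition rho :: "nat \<Rightarrow> real" where "rho i = sgn (lca a0 t0 i)"
definition eps :: "nat \<Rightarrow> real" where "eps a = sgn (lca a 0 a)"

context assumes rlt: "CARD('r) < n"
begin

lemma a0: "a0 < n" "a0 \<notin> R"
proof -
  have "\<not> {..<n} \<subseteq> R"
  proof
    assume "{..<n} \<subseteq> R"
    hence "card {..<n} \<le> card R" using R(1) by (intro card_mono) (auto simp: finite_subset)
    thus False using R(2) rlt by simp
  qed
  hence "\<exists>a. a < n \<and> a \<notin> R" by auto
  thus "a0 < n" "a0 \<notin> R" unfolding a0_def by (metis (mono_tags, lifting) someI_ex)+
qed

lemma rho_R:
  assumes a: "a < n" "a \<notin> R" and i: "i \<in> R" and t: "t \<in> {0..1}"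
  shows "sgn (lca a t i) = rho i"
proof (cases "i = bR")
  case True thus ?thesis unfolding rho_def using lca_b[OF a] lca_b[OF a0] by simp
next
  case False
  have t0i: "t0 \<in> {0..1}" using t0 by auto
  have "sgn (lca a t i) = sgn (lca a t0 i)" using lca_const[OF a i False t t0i] .
  also have "\<dots> = rho i" unfolding rho_def using lca_indep_a[OF a a0 i] by simp
  finally show ?thesis .
qed

lemma circsA: "circs n A R rho eps"
  unfolding circs_def
proof (intro allI impI)
  fix a assume a: "a < n \<and> a \<notin> R"
  have t: "(0::real) \<in> {0..1}" by simp
  show "\<exists>k. isdep n A k \<and> (\<forall>i<n. i \<notin> insert a R \<longrightarrow> k i = 0) \<and> (\<forall>i\<in>R. sgn (k i) = rho i) \<and> sgn (k a) = eps a"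
    using isdep_cong[OF lca_dep[of a 0] P0] lca_out[of a] rho_R[of a _ 0] a unfolding eps_def by auto
qed

lemma circsB: "circs n B R rho (\<lambda>i. - eps i)"
  unfolding circs_def
proof (intro allI impI)
  fix a assume a: "a < n \<and> a \<notin> R"
  have "sgn (lca a 1 a) = - eps a" using lca_flip[of a] a unfolding eps_def by simp
  thus "\<exists>k. isdep n B k \<and> (\<forall>i<n. i \<notin> insert a R \<longrightarrow> k i = 0) \<and> (\<forall>i\<in>R. sgn (k i) = rho i) \<and> sgn (k a) = - eps a"
    using isdep_cong[OF lca_dep[of a 1] P1] lca_out[of a] rho_R[of a _ 1] a by auto
qed

lemma pmA: "pm R n rho eps"
  unfolding pm_def
proof (intro conjI ballI allI impI)
  fix i assume i: "i \<in> R"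
  have "lca a0 t0 i \<noteq> 0" using lca_nzR[OF a0 i] t0 by auto
  thus "rho i = 1 \<or> rho i = -1" unfolding rho_def by (auto simp: sgn_if)
next
  fix a assume "a < n" "a \<notin> R"
  hence "lca a 0 a \<noteq> 0" using lca_flip by blast
  thus "eps a = 1 \<or> eps a = -1" unfolding eps_def by (auto simp: sgn_if)
qed

lemma pmB: "pm R n rho (\<lambda>i. - eps i)"
  using pmA unfolding pm_def by auto

lemma covB: "\<exists>u. u \<noteq> 0 \<and> (\<forall>i<n. sgn (B i \<bullet> u) = zv R n rho eps i)"
proof -
  obtain u where u: "u \<noteq> 0" "\<forall>i\<in>R. sgn (B i \<bullet> u) = rho i" "\<forall>a. a < n \<and> a \<notin> R \<longrightarrow> sgn (B a \<bullet> u) = - (- eps a)"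
    using cov_constr[OF gpB R pmB circsB] by blast
  have "\<forall>i<n. sgn (B i \<bullet> u) = zv R n rho eps i" using u(2,3) unfolding zv_def by auto
  thus ?thesis using u(1) by blast
qed

lemma covA: "\<exists>u. u \<noteq> 0 \<and> (\<forall>i<n. sgn (A i \<bullet> u) = zv R n rho (\<lambda>i. - eps i) i)"
proof -
  obtain u where u: "u \<noteq> 0" "\<forall>i\<in>R. sgn (A i \<bullet> u) = rho i" "\<forall>a. a < n \<and> a \<notin> R \<longrightarrow> sgn (A a \<bullet> u) = - eps a"
    using cov_constr[OF gpA R pmA circsA] by blast
  have "\<forall>i<n. sgn (A i \<bullet> u) = zv R n rho (\<lambda>i. - eps i) i" using u(2,3) unfolding zv_def by auto
  thus ?thesis using u(1) by blast
qed

lemma depAB: "dep_patterns n A - dep_patterns n B =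
   {F. \<exists>s. (s = 1 \<or> s = (-1::real)) \<and> F \<in> SpecP R n (\<lambda>i. s * zv R n rho eps i)}"
proof
  show "dep_patterns n A - dep_patterns n B \<subseteq> {F. \<exists>s. (s = 1 \<or> s = (-1::real)) \<and> F \<in> SpecP R n (\<lambda>i. s * zv R n rho eps i)}"
    using diff_sub[OF gpA gpB rn R pmA circsA circsB HT_AB] by blast
next
  obtain u where u: "\<forall>i<n. sgn (B i \<bullet> u) = zv R n rho eps i" using covB by blast
  show "{F. \<exists>s. (s = 1 \<or> s = (-1::real)) \<and> F \<in> SpecP R n (\<lambda>i. s * zv R n rho eps i)} \<subseteq> dep_patterns n A - dep_patterns n B"
    using spec_in[OF gpA rn R(1) pmA circsA] spec_out[OF u] by blast
qed

lemma depBA: "dep_patterns n B - dep_patterns n A =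
   {F. \<exists>s. (s = 1 \<or> s = (-1::real)) \<and> F \<in> SpecP R n (\<lambda>i. s * zv R n rho (\<lambda>i. - eps i) i)}"
proof
  have cA: "circs n A R rho (\<lambda>i. - (- eps i))" using circsA by simp
  show "dep_patterns n B - dep_patterns n A \<subseteq> {F. \<exists>s. (s = 1 \<or> s = (-1::real)) \<and> F \<in> SpecP R n (\<lambda>i. s * zv R n rho (\<lambda>i. - eps i) i)}"
    using diff_sub[OF gpB gpA rn R pmB circsB cA HT_BA] by blast
next
  obtain u where u: "\<forall>i<n. sgn (A i \<bullet> u) = zv R n rho (\<lambda>i. - eps i) i" using covA by blast
  show "{F. \<exists>s. (s = 1 \<or> s = (-1::real)) \<and> F \<in> SpecP R n (\<lambda>i. s * zv R n rho (\<lambda>i. - eps i) i)} \<subseteq> dep_patterns n B - dep_patterns n A"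
    using spec_in[OF gpB rn R(1) pmB circsB] spec_out[OF u] by blast
qed

lemma Z_cov: "zv R n rho eps \<in> covectors n B - covectors n A"
proof
  obtain u where u: "u \<noteq> 0" "\<forall>i<n. sgn (B i \<bullet> u) = zv R n rho eps i" using covB by blast
  have "zv R n rho eps = (\<lambda>i. if i < n then sgn (B i \<bullet> u) else 0)"
    by (rule ext) (use u(2) R(1) in \<open>auto simp: zv_def\<close>)
  thus "zv R n rho eps \<in> covectors n B" unfolding covectors_def using u(1) by blast
next
  show "zv R n rho eps \<notin> covectors n A"
  proof
    assume "zv R n rho eps \<in> covectors n A"
    then obtain u where u: "zv R n rho eps = (\<lambda>i. if i < n then sgn (A i \<bullet> u) else 0)"
      unfolding covectors_def by blast
    have t: "(0::real) \<in> {0..1}" by simp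
    define k where "k = lca a0 0"
    have dk: "isdep n A k" unfolding k_def using isdep_cong[OF lca_dep[OF a0 t] P0] .
    have "k a0 \<noteq> 0" unfolding k_def using lca_flip[OF a0] by blast
    hence ne: "supp n k \<noteq> {}" using a0 unfolding supp_def by auto
    have "\<forall>i<n. k i \<noteq> 0 \<longrightarrow> sgn (k i) = 1 * sgn (A i \<bullet> u)"
    proof (intro allI impI)
      fix i assume i: "i < n" "k i \<noteq> 0"
      hence "i \<in> insert a0 R" using lca_out[OF a0] unfolding k_def by blast
      hence "sgn (k i) = zv R n rho eps i" unfolding k_def zv_def eps_def
        using rho_R[OF a0 _ t] a0 i(1) by auto
      thus "sgn (k i) = 1 * sgn (A i \<bullet> u)" using fun_cong[OF u, of i] i(1) by simp
    qed
    thus False using orth[OF dk ne, of 1 u] by simp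
  qed
qed

lemma Z_pm: "\<forall>i<n. zv R n rho eps i = 1 \<or> zv R n rho eps i = -1"
  using pmA unfolding pm_def zv_def by auto

end

end

definition wt :: "nat \<Rightarrow> real \<Rightarrow> real \<Rightarrow> (nat \<Rightarrow> real) \<Rightarrow> real" where
  "wt n x y F = x ^ card {i. i < n \<and> F i = 0} * y ^ card {i. i < n \<and> F i = -1}"

lemma prod_if_pow:
  assumes "finite M"
  shows "(\<Prod>c\<in>M. if Q c then (a::real) else 1) = a ^ card {c\<in>M. Q c}"
proof -
  have "(\<Prod>c\<in>M. if Q c then a else 1) = (\<Prod>c\<in>{c\<in>M. Q c}. a)"
    using assms by (intro prod.mono_neutral_cong_right) auto
  thus ?thesis by simp
qed

lemma prod_if2:
  assumes "finite M"
  shows "(\<Prod>c\<in>M. if Q c then (a::real) else b) = a ^ card {c\<in>M. Q c} * b ^ card {c\<in>M. \<not> Q c}"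
proof -
  have "(\<Prod>c\<in>M. if Q c then a else b) = (\<Prod>c\<in>M. (if Q c then a else 1) * (if \<not> Q c then b else 1))"
    by (intro prod.cong) auto
  also have "\<dots> = (\<Prod>c\<in>M. if Q c then a else 1) * (\<Prod>c\<in>M. if \<not> Q c then b else 1)"
    by (rule prod.distrib)
  finally show ?thesis using prod_if_pow[OF assms] by simp
qed

lemma box_sum:
  fixes Z :: "nat \<Rightarrow> real"
  assumes R: "R \<subseteq> {..<n}" and Z: "\<forall>i<n. Z i = 1 \<or> Z i = -1"
  defines "M \<equiv> {..<n} - R"
  defines "Box \<equiv> {F. (\<forall>i\<in>R. F i = Z i) \<and> (\<forall>c\<in>M. F c = 0 \<or> F c = Z c) \<and> (\<forall>i. n \<le> i \<longrightarrow> F i = 0)}"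
  shows "(\<Sum>F\<in>Box. wt n x y F) = y ^ card {i\<in>R. Z i = -1} * ((x + y) ^ card {c\<in>M. Z c = -1} * (x + 1) ^ card {c\<in>M. Z c \<noteq> -1})"
proof -
  have fM: "finite M" unfolding M_def by simp
  have fR: "finite R" using R finite_subset by blast
  define h where "h = (\<lambda>v::real. if v = 0 then x else if v = -1 then y else 1)"
  define phi where "phi = (\<lambda>G. \<lambda>i. if i \<in> R then Z i else if i \<in> M then G i else (0::real))"
  define AA where "AA = (\<lambda>c. {0, Z c})"
  have wphi: "wt n x y (phi G) = y ^ card {i\<in>R. Z i = -1} * (\<Prod>c\<in>M. h (G c))"
    if G: "G \<in> PiE M AA" for G
  proof -
    have GM: "G c = 0 \<or> G c = Z c" if "c \<in> M" for c using G that unfolding AA_def by auto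
    have Zn: "Z i \<noteq> 0" if "i \<in> R" for i using Z that R by force
    have c0: "{i. i < n \<and> phi G i = 0} = {c\<in>M. G c = 0}"
      using Zn R unfolding phi_def M_def by auto
    have "{i. i < n \<and> phi G i = -1} = {i\<in>R. Z i = -1} \<union> {c\<in>M. G c = -1}"
      using R unfolding phi_def M_def by auto
    moreover have "card ({i\<in>R. Z i = -1} \<union> {c\<in>M. G c = -1}) = card {i\<in>R. Z i = -1} + card {c\<in>M. G c = -1}"
      by (rule card_Un_disjoint) (use fR fM in \<open>auto simp: M_def\<close>)
    ultimately have c1: "card {i. i < n \<and> phi G i = -1} = card {i\<in>R. Z i = -1} + card {c\<in>M. G c = -1}"
      by simp
    have "(\<Prod>c\<in>M. h (G c)) = (\<Prod>c\<in>M. (if G c = 0 then x else 1) * (if G c = -1 then y else 1))"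
      by (intro prod.cong) (auto simp: h_def)
    also have "\<dots> = x ^ card {c\<in>M. G c = 0} * y ^ card {c\<in>M. G c = -1}"
      by (simp add: prod.distrib prod_if_pow[OF fM])
    finally show ?thesis unfolding wt_def c0 c1 by (simp add: power_add)
  qed
  have "(\<Sum>F\<in>Box. wt n x y F) = (\<Sum>G\<in>PiE M AA. wt n x y (phi G))"
  proof (rule sum.reindex_bij_witness[where i = phi and j = "\<lambda>F. restrict F M"])
    fix G assume G: "G \<in> PiE M AA"
    show "restrict (phi G) M = G" using G unfolding phi_def M_def PiE_def extensional_def
      by (auto simp: restrict_def)
    show "phi G \<in> Box" using G R unfolding phi_def Box_def M_def AA_def by auto
  next
    fix F assume F: "F \<in> Box"
    show "phi (restrict F M) = F"
    proof
      fix i show "phi (restrict F M) i = F i"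
        using F unfolding phi_def Box_def M_def by (cases "i < n") auto
    qed
    show "restrict F M \<in> PiE M AA" using F unfolding Box_def AA_def by auto
    show "wt n x y (phi (restrict F M)) = wt n x y F" using \<open>phi (restrict F M) = F\<close> by simp
  qed
  also have "\<dots> = (\<Sum>G\<in>PiE M AA. y ^ card {i\<in>R. Z i = -1} * (\<Prod>c\<in>M. h (G c)))"
    using wphi by (intro sum.cong) auto
  also have "\<dots> = y ^ card {i\<in>R. Z i = -1} * (\<Sum>G\<in>PiE M AA. (\<Prod>c\<in>M. h (G c)))"
    by (simp add: sum_distrib_left)
  also have "(\<Sum>G\<in>PiE M AA. (\<Prod>c\<in>M. h (G c))) = (\<Prod>c\<in>M. \<Sum>v\<in>AA c. h v)"
    using prod_sum_PiE[OF fM, of AA "\<lambda>c v. h v"] unfolding AA_def by simp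
  also have "\<dots> = (\<Prod>c\<in>M. if Z c = -1 then x + y else x + 1)"
  proof (intro prod.cong refl)
    fix c assume "c \<in> M"
    hence "Z c = 1 \<or> Z c = -1" using Z unfolding M_def by auto
    thus "(\<Sum>v\<in>AA c. h v) = (if Z c = -1 then x + y else x + 1)" unfolding AA_def h_def by auto
  qed
  also have "\<dots> = (x + y) ^ card {c\<in>M. Z c = -1} * (x + 1) ^ card {c\<in>M. Z c \<noteq> -1}"
    by (rule prod_if2[OF fM])
  finally show ?thesis .
qed

definition SV :: "nat \<Rightarrow> (nat \<Rightarrow> real) set" where
  "SV n = {F. (\<forall>i<n. F i \<in> {-1,0,1}) \<and> (\<forall>i\<ge>n. F i = 0)}"

lemma finite_SV: "finite (SV n)"
proof (induction n)
  case 0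
  have "SV 0 = {\<lambda>i. 0}" unfolding SV_def by auto
  thus ?case by simp
next
  case (Suc n)
  have sub: "SV (Suc n) \<subseteq> (\<lambda>(F, v). F(n := v)) ` (SV n \<times> {-1,0,1})"
  proof
    fix F assume F: "F \<in> SV (Suc n)"
    have "F(n := 0) \<in> SV n" using F unfolding SV_def by (auto simp: less_Suc_eq)
    moreover have "F n \<in> {-1,0,1}" using F unfolding SV_def by auto
    moreover have "F = (F(n := 0))(n := F n)" by simp
    ultimately have "(F(n := 0), F n) \<in> SV n \<times> {-1,0,1}" by simp
    thus "F \<in> (\<lambda>(F, v). F(n := v)) ` (SV n \<times> {-1,0,1})"
      by (rule rev_image_eqI) simp
  qed
  have "finite (SV n \<times> {-1,0,1::real})" using Suc.IH by simp
  hence "finite ((\<lambda>(F, v). F(n := v)) ` (SV n \<times> {-1,0,1}))" by (rule finite_imageI)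
  thus ?case using sub by (rule finite_subset[rotated])
qed

lemma dep_SV: "dep_patterns n V \<subseteq> SV n"
proof
  fix F assume "F \<in> dep_patterns n V"
  then obtain lam where "F = sv n lam" unfolding dep_patterns_iff by blast
  thus "F \<in> SV n" using sv_vals[of n lam] unfolding SV_def by simp
qed

lemma finite_dep: "finite (dep_patterns n V)"
  using finite_subset[OF dep_SV finite_SV] .

lemma fstar_wt: "fstar n V x y = (\<Sum>F\<in>dep_patterns n V. wt n x y F)"
  unfolding fstar_def wt_def ..

lemma fstar_diff:
  "fstar n A x y - fstar n B x y =
     (\<Sum>F\<in>dep_patterns n A - dep_patterns n B. wt n x y F) - (\<Sum>F\<in>dep_patterns n B - dep_patterns n A. wt n x y F)"
proof -
  have "fstar n A x y = (\<Sum>F\<in>dep_patterns n A \<inter> dep_patterns n B. wt n x y F) + (\<Sum>F\<in>dep_patterns n A - dep_patterns n B. wt n x y F)"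
    unfolding fstar_wt by (rule sum.Int_Diff[OF finite_dep])
  moreover have "fstar n B x y = (\<Sum>F\<in>dep_patterns n B \<inter> dep_patterns n A. wt n x y F) + (\<Sum>F\<in>dep_patterns n B - dep_patterns n A. wt n x y F)"
    unfolding fstar_wt by (rule sum.Int_Diff[OF finite_dep])
  moreover have "dep_patterns n B \<inter> dep_patterns n A = dep_patterns n A \<inter> dep_patterns n B" by blast
  ultimately show ?thesis by simp
qed

lemma specP_sum:
  fixes Z :: "nat \<Rightarrow> real"
  assumes R: "R \<subseteq> {..<n}" and Z: "\<forall>i<n. Z i = 1 \<or> Z i = -1"
  shows "(\<Sum>F\<in>SpecP R n Z. wt n x y F) = y ^ card {i\<in>R. Z i = -1} *
     ((x + y) ^ card {c\<in>{..<n} - R. Z c = -1} * (x + 1) ^ card {c\<in>{..<n} - R. Z c \<noteq> -1} - x ^ card ({..<n} - R))"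
proof -
  define M where "M = {..<n} - R"
  define Box where "Box = {F. (\<forall>i\<in>R. F i = Z i) \<and> (\<forall>c\<in>M. F c = 0 \<or> F c = Z c) \<and> (\<forall>i. n \<le> i \<longrightarrow> F i = (0::real))}"
  define base where "base = (\<lambda>i. if i \<in> R then Z i else (0::real))"
  have bs: "(\<Sum>F\<in>Box. wt n x y F) = y ^ card {i\<in>R. Z i = -1} * ((x + y) ^ card {c\<in>M. Z c = -1} * (x + 1) ^ card {c\<in>M. Z c \<noteq> -1})"
    unfolding Box_def M_def by (rule box_sum[OF R Z])
  have BoxSV: "Box \<subseteq> SV n"
  proof
    fix F assume F: "F \<in> Box"
    have "F i \<in> {-1,0,1}" if "i < n" for i
    proof (cases "i \<in> R")
      case True thus ?thesis using F Z that unfolding Box_def by auto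
    next
      case False
      hence "i \<in> M" using that unfolding M_def by auto
      hence "F i = 0 \<or> F i = Z i" using F unfolding Box_def by blast
      moreover have "Z i = 1 \<or> Z i = -1" using Z that by blast
      ultimately show ?thesis by auto
    qed
    thus "F \<in> SV n" using F unfolding SV_def Box_def by auto
  qed
  have fB: "finite Box" using finite_subset[OF BoxSV finite_SV] .
  have Zn: "Z i \<noteq> 0" if "i \<in> R" for i using Z that R by force
  have bB: "base \<in> Box" unfolding Box_def base_def M_def using R by auto
  have SB: "SpecP R n Z = Box - {base}"
  proof
    show "SpecP R n Z \<subseteq> Box - {base}"
    proof
      fix F assume F: "F \<in> SpecP R n Z"
      then obtain c where c: "c < n" "c \<notin> R" "F c \<noteq> 0" unfolding SpecP_def by blast
      have "F \<noteq> base" using c unfolding base_def by auto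
      moreover have "F \<in> Box" using F unfolding SpecP_def Box_def M_def by auto
      ultimately show "F \<in> Box - {base}" by simp
    qed
  next
    show "Box - {base} \<subseteq> SpecP R n Z"
    proof
      fix F assume F: "F \<in> Box - {base}"
      have "\<exists>i<n. i \<notin> R \<and> F i \<noteq> 0"
      proof (rule ccontr)
        assume "\<not> ?thesis"
        hence z: "\<forall>i<n. i \<notin> R \<longrightarrow> F i = 0" by blast
        have "F i = base i" for i
        proof (cases "i \<in> R")
          case True thus ?thesis using F unfolding Box_def base_def by auto
        next
          case False
          hence "F i = 0" using z F unfolding Box_def by (cases "i < n") auto
          thus ?thesis using False unfolding base_def by simp
        qed
        hence "F = base" by (rule ext)
        thus False using F by simp
      qed
      thus "F \<in> SpecP R n Z" using F unfolding SpecP_def Box_def M_def by auto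
    qed
  qed
  have wb: "wt n x y base = x ^ card M * y ^ card {i\<in>R. Z i = -1}"
  proof -
    have "{i. i < n \<and> base i = 0} = M" unfolding M_def base_def using Zn by auto
    moreover have "{i. i < n \<and> base i = -1} = {i\<in>R. Z i = -1}" unfolding base_def using R by auto
    ultimately show ?thesis unfolding wt_def by simp
  qed
  have "(\<Sum>F\<in>SpecP R n Z. wt n x y F) = (\<Sum>F\<in>Box. wt n x y F) - wt n x y base"
    unfolding SB using fB bB by (simp add: sum_diff1)
  thus ?thesis unfolding bs wb M_def[symmetric] by (simp add: algebra_simps)
qed

definition polyG :: "nat \<Rightarrow> nat \<Rightarrow> (nat \<Rightarrow> nat \<Rightarrow> int) \<Rightarrow> real \<Rightarrow> real \<Rightarrow> real" where
  "polyG r m G x y = (\<Sum>j\<le>r. \<Sum>k\<le>m. of_int (G j k) * (x + y) ^ k * (x + 1) ^ (m - k) * y ^ j)"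

definition EE :: "nat \<Rightarrow> nat \<Rightarrow> real \<Rightarrow> real \<Rightarrow> real" where
  "EE m l x y = (x + y) ^ l * (x + 1) ^ (m - l)"

lemma dsum:
  assumes "a \<le> (r::nat)" "b \<le> (m::nat)"
  shows "(\<Sum>j\<le>r. \<Sum>k\<le>m. if j = a \<and> k = b then (T j k::real) else 0) = T a b"
proof -
  have "(\<Sum>k\<le>m. if j = a \<and> k = b then T j k else 0) = (if j = a then T j b else 0)" for j
  proof (cases "j = a")
    case True
    hence "(\<Sum>k\<le>m. if j = a \<and> k = b then T j k else 0) = (\<Sum>k\<le>m. if k = b then T j k else 0)" by simp
    also have "\<dots> = T j b" using assms(2) by (simp add: sum.delta)
    finally show ?thesis using True by simp
  qed simp
  hence "(\<Sum>j\<le>r. \<Sum>k\<le>m. if j = a \<and> k = b then T j k else 0) = (\<Sum>j\<le>r. if j = a then T j b else 0)" by simp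
  also have "\<dots> = T a b" using assms(1) by (simp add: sum.delta)
  finally show ?thesis .
qed

lemma gmat_poly:
  assumes i: "i \<le> r" and l: "l \<le> n - r"
  shows "polyG r (n - r) (gmat r n i l) x y =
     y ^ i * EE (n - r) l x y + y ^ (r - i) * EE (n - r) (n - r - l) x y
     - y ^ (r - i) * EE (n - r) l x y - y ^ i * EE (n - r) (n - r - l) x y"
proof (cases "2 * i = r \<or> 2 * l = n - r")
  case True
  hence "gmat r n i l = (\<lambda>j k. 0)" unfolding gmat_def by simp
  hence "polyG r (n - r) (gmat r n i l) x y = 0" unfolding polyG_def by simp
  moreover have "r - i = i \<or> n - r - l = l" using True by auto
  ultimately show ?thesis by auto
next
  case False
  define m where "m = n - r"
  define T where "T = (\<lambda>j k. (x + y) ^ k * (x + 1) ^ (m - k) * y ^ j)"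
  have g: "of_int (gmat r n i l j k) * (x + y) ^ k * (x + 1) ^ (m - k) * y ^ j =
      (if j = i \<and> k = l then T j k else 0) + (if j = r - i \<and> k = m - l then T j k else 0)
      - (if j = r - i \<and> k = l then T j k else 0) - (if j = i \<and> k = m - l then T j k else 0)" for j k
    using False unfolding gmat_def T_def m_def by (simp add: algebra_simps)
  have "polyG r (n - r) (gmat r n i l) x y =
     (\<Sum>j\<le>r. \<Sum>k\<le>m. (if j = i \<and> k = l then T j k else 0) + (if j = r - i \<and> k = m - l then T j k else 0)
      - (if j = r - i \<and> k = l then T j k else 0) - (if j = i \<and> k = m - l then T j k else 0))"
    unfolding polyG_def m_def[symmetric] using g by simp
  also have "\<dots> = (\<Sum>j\<le>r. \<Sum>k\<le>m. if j = i \<and> k = l then T j k else 0)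
      + (\<Sum>j\<le>r. \<Sum>k\<le>m. if j = r - i \<and> k = m - l then T j k else 0)
      - (\<Sum>j\<le>r. \<Sum>k\<le>m. if j = r - i \<and> k = l then T j k else 0)
      - (\<Sum>j\<le>r. \<Sum>k\<le>m. if j = i \<and> k = m - l then T j k else 0)"
    by (simp add: sum.distrib sum_subtractf)
  also have "\<dots> = T i l + T (r - i) (m - l) - T (r - i) l - T i (m - l)"
    using i l unfolding m_def by (simp add: dsum)
  finally show ?thesis unfolding T_def EE_def m_def by (simp add: algebra_simps)
qed

lemma SpecP_SV:
  assumes R: "R \<subseteq> {..<n}" and Z: "\<forall>i<n. Z i = 1 \<or> Z i = -1"
  shows "SpecP R n Z \<subseteq> SV n"
proof
  fix F assume F: "F \<in> SpecP R n Z"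
  have "F i \<in> {-1,0,1}" if "i < n" for i
  proof (cases "i \<in> R")
    case True thus ?thesis using F Z that unfolding SpecP_def by auto
  next
    case False
    hence "F i = 0 \<or> F i = Z i" using F that unfolding SpecP_def by blast
    moreover have "Z i = 1 \<or> Z i = -1" using Z that by blast
    ultimately show ?thesis by auto
  qed
  thus "F \<in> SV n" using F unfolding SV_def SpecP_def by auto
qed

lemma spec_union_sum:
  assumes R: "R \<subseteq> {..<n}" "R \<noteq> {}" and Z: "\<forall>i<n. Z i = 1 \<or> Z i = -1"
  shows "(\<Sum>F\<in>{F. \<exists>s. (s = 1 \<or> s = (-1::real)) \<and> F \<in> SpecP R n (\<lambda>i. s * Z i)}. wt n x y F) =
     (\<Sum>F\<in>SpecP R n Z. wt n x y F) + (\<Sum>F\<in>SpecP R n (\<lambda>i. - Z i). wt n x y F)"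
proof -
  have Z': "\<forall>i<n. - Z i = 1 \<or> - Z i = -1" using Z by auto
  have eq: "{F. \<exists>s. (s = 1 \<or> s = (-1::real)) \<and> F \<in> SpecP R n (\<lambda>i. s * Z i)} = SpecP R n Z \<union> SpecP R n (\<lambda>i. - Z i)"
    by auto
  obtain b where b: "b \<in> R" using R(2) by blast
  have "Z b \<noteq> 0" using Z b R(1) by force
  hence dj: "SpecP R n Z \<inter> SpecP R n (\<lambda>i. - Z i) = {}" using b unfolding SpecP_def by auto
  have f1: "finite (SpecP R n Z)" using finite_subset[OF SpecP_SV[OF R(1) Z] finite_SV] .
  have f2: "finite (SpecP R n (\<lambda>i. - Z i))" using finite_subset[OF SpecP_SV[OF R(1) Z'] finite_SV] .
  show ?thesis unfolding eq by (rule sum.union_disjoint[OF f1 f2 dj])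
qed

lemma zv_neg: "(\<lambda>i. - zv R n rho del i) = zv R n (\<lambda>i. - rho i) (\<lambda>i. - del i)"
  by (auto simp: zv_def)

lemma pm_neg: "pm R n rho del \<Longrightarrow> pm R n (\<lambda>i. - rho i) (\<lambda>i. - del i)"
  "pm R n rho del \<Longrightarrow> pm R n rho (\<lambda>i. - del i)"
  unfolding pm_def by auto

lemma card_neg:
  assumes "finite S" "\<forall>i\<in>S. f i = 1 \<or> f i = (-1::real)"
  shows "card {i\<in>S. - f i = -1} = card S - card {i\<in>S. f i = -1}"
proof -
  have "{i\<in>S. - f i = -1} = S - {i\<in>S. f i = -1}" using assms(2) by force
  thus ?thesis using assms(1) by (simp add: card_Diff_subset)
qed

lemma specP_zv_sum:
  assumes R: "R \<subseteq> {..<n}" and pm: "pm R n rho del"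
  shows "(\<Sum>F\<in>SpecP R n (zv R n rho del). wt n x y F) = y ^ card {i\<in>R. rho i = -1} *
     ((x + y) ^ card {c\<in>{..<n} - R. del c = -1} * (x + 1) ^ (card ({..<n} - R) - card {c\<in>{..<n} - R. del c = -1})
       - x ^ card ({..<n} - R))"
proof -
  have Z: "\<forall>i<n. zv R n rho del i = 1 \<or> zv R n rho del i = -1" using pm unfolding pm_def zv_def by auto
  have e1: "{i\<in>R. zv R n rho del i = -1} = {i\<in>R. rho i = -1}" unfolding zv_def by auto
  have e2: "{c\<in>{..<n} - R. zv R n rho del c = -1} = {c\<in>{..<n} - R. del c = -1}" unfolding zv_def by auto
  have e3: "{c\<in>{..<n} - R. zv R n rho del c \<noteq> -1} = ({..<n} - R) - {c\<in>{..<n} - R. del c = -1}"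
    unfolding zv_def by auto
  have e4: "card {c\<in>{..<n} - R. zv R n rho del c \<noteq> -1} = card ({..<n} - R) - card {c\<in>{..<n} - R. del c = -1}"
    unfolding e3 by (rule card_Diff_subset) auto
  show ?thesis using specP_sum[OF R Z, of x y] unfolding e1 e2 e4 .
qed

lemma step_lt:
  fixes A B :: "nat \<Rightarrow> real^'r::finite"
  assumes ctx: "mctx n A B P t0 R" and rlt: "CARD('r) < n"
    and Ys: "{F \<in> covectors n B - covectors n A. \<forall>i<n. F i \<in> {-1, 1}} = {Y, - Y}"
  shows "fstar n A x y - fstar n B x y = polyG CARD('r) (n - CARD('r))
     (gmat CARD('r) n (card (R \<inter> {j. Y j = -1})) (card ({j. j < n \<and> Y j = -1} - R))) x y"
proof -
  interpret mctx n A B P t0 R by (rule ctx)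
  define M where "M = {..<n} - R"
  define m where "m = n - CARD('r)"
  define a where "a = card {i\<in>R. rho i = -1}"
  define k where "k = card {c\<in>M. eps c = -1}"
  have fR: "finite R" using R(1) finite_subset by blast
  have fM: "finite M" unfolding M_def by simp
  have "card ({..<n} - R) = card {..<n} - card R" using R(1) fR by (rule card_Diff_subset[rotated])
  hence cM: "card M = m" unfolding M_def m_def using R(2) by simp
  have pA: "pm R n rho eps" using pmA[OF rlt] .
  have rpm: "\<forall>i\<in>R. rho i = 1 \<or> rho i = -1" using pA unfolding pm_def by blast
  have epm: "\<forall>c\<in>M. eps c = 1 \<or> eps c = -1" using pA unfolding pm_def M_def by blast
  have "card {i\<in>R. rho i = -1} \<le> card R" using fR by (rule card_mono) auto
  hence ar: "a \<le> CARD('r)" unfolding a_def using R(2) by simp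
  have "card {c\<in>M. eps c = -1} \<le> card M" using fM by (rule card_mono) auto
  hence km: "k \<le> m" unfolding k_def using cM by simp
  have cR1: "card {i\<in>R. - rho i = -1} = CARD('r) - a" unfolding a_def using card_neg[OF fR rpm] R(2) by simp
  have cM1: "card {c\<in>M. - eps c = -1} = m - k" unfolding k_def using card_neg[OF fM epm] cM by simp
  have Rne: "R \<noteq> {}" using R(2) by auto
  note sz = specP_zv_sum[OF R(1), of _ _ x y, folded M_def, unfolded cM]
  have S1: "(\<Sum>F\<in>SpecP R n (zv R n rho eps). wt n x y F) = y ^ a * ((x + y) ^ k * (x + 1) ^ (m - k) - x ^ m)"
    using sz[OF pA] unfolding a_def k_def .
  have S2: "(\<Sum>F\<in>SpecP R n (\<lambda>i. - zv R n rho eps i). wt n x y F) = y ^ (CARD('r) - a) * ((x + y) ^ (m - k) * (x + 1) ^ (m - (m - k)) - x ^ m)"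
    using sz[OF pm_neg(1)[OF pA]] unfolding zv_neg cR1 cM1 .
  have S3: "(\<Sum>F\<in>SpecP R n (zv R n rho (\<lambda>i. - eps i)). wt n x y F) = y ^ a * ((x + y) ^ (m - k) * (x + 1) ^ (m - (m - k)) - x ^ m)"
    using sz[OF pm_neg(2)[OF pA]] unfolding a_def[symmetric] cM1 .
  have S4: "(\<Sum>F\<in>SpecP R n (\<lambda>i. - zv R n rho (\<lambda>i. - eps i) i). wt n x y F) = y ^ (CARD('r) - a) * ((x + y) ^ k * (x + 1) ^ (m - k) - x ^ m)"
    using sz[OF pm_neg(1)[OF pm_neg(2)[OF pA]]] unfolding zv_neg cR1 by (simp add: k_def[symmetric])
  have Z1: "\<forall>i<n. zv R n rho eps i = 1 \<or> zv R n rho eps i = -1" using pA unfolding pm_def zv_def by auto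
  have Z2: "\<forall>i<n. zv R n rho (\<lambda>i. - eps i) i = 1 \<or> zv R n rho (\<lambda>i. - eps i) i = -1"
    using pA unfolding pm_def zv_def by auto
  have mk: "m - (m - k) = k" using km by simp
  have "fstar n A x y - fstar n B x y =
     ((\<Sum>F\<in>SpecP R n (zv R n rho eps). wt n x y F) + (\<Sum>F\<in>SpecP R n (\<lambda>i. - zv R n rho eps i). wt n x y F))
   - ((\<Sum>F\<in>SpecP R n (zv R n rho (\<lambda>i. - eps i)). wt n x y F) + (\<Sum>F\<in>SpecP R n (\<lambda>i. - zv R n rho (\<lambda>i. - eps i) i). wt n x y F))"
    unfolding fstar_diff depAB[OF rlt] depBA[OF rlt] spec_union_sum[OF R(1) Rne Z1] spec_union_sum[OF R(1) Rne Z2] ..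
  also have "\<dots> = (y ^ a * (EE m k x y - x ^ m) + y ^ (CARD('r) - a) * (EE m (m - k) x y - x ^ m))
   - (y ^ a * (EE m (m - k) x y - x ^ m) + y ^ (CARD('r) - a) * (EE m k x y - x ^ m))"
    unfolding S1 S2 S3 S4 EE_def mk ..
  also have "\<dots> = y ^ a * EE m k x y + y ^ (CARD('r) - a) * EE m (m - k) x y
      - y ^ (CARD('r) - a) * EE m k x y - y ^ a * EE m (m - k) x y"
    by (simp add: algebra_simps)
  finally have fd: "fstar n A x y - fstar n B x y = y ^ a * EE m k x y + y ^ (CARD('r) - a) * EE m (m - k) x y
      - y ^ (CARD('r) - a) * EE m k x y - y ^ a * EE m (m - k) x y" .
  have "zv R n rho eps \<in> {F \<in> covectors n B - covectors n A. \<forall>i<n. F i \<in> {-1, 1}}"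
    using Z_cov[OF rlt] Z1 by auto
  hence ZY: "zv R n rho eps = Y \<or> zv R n rho eps = - Y" unfolding Ys by blast
  have e1: "R \<inter> {j. zv R n rho eps j = -1} = {i\<in>R. rho i = -1}" unfolding zv_def by auto
  have e2: "{j. j < n \<and> zv R n rho eps j = -1} - R = {c\<in>M. eps c = -1}" unfolding zv_def M_def by auto
  have e3: "R \<inter> {j. - zv R n rho eps j = -1} = {i\<in>R. - rho i = -1}" unfolding zv_def by auto
  have e4: "{j. j < n \<and> - zv R n rho eps j = -1} - R = {c\<in>M. - eps c = -1}" unfolding zv_def M_def by auto
  show ?thesis
  proof (cases "zv R n rho eps = Y")
    case True
    have i: "card (R \<inter> {j. Y j = -1}) = a" unfolding True[symmetric] e1 a_def ..
    have l: "card ({j. j < n \<and> Y j = -1} - R) = k" unfolding True[symmetric] e2 k_def ..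
    show ?thesis unfolding i l fd using gmat_poly[OF ar km[unfolded m_def]] unfolding m_def by simp
  next
    case False
    hence "Y = (\<lambda>i. - zv R n rho eps i)" using ZY by (auto simp: fun_eq_iff)
    hence i: "card (R \<inter> {j. Y j = -1}) = CARD('r) - a" and l: "card ({j. j < n \<and> Y j = -1} - R) = m - k"
      using e3 e4 cR1 cM1 by simp_all
    have g: "polyG CARD('r) (n - CARD('r)) (gmat CARD('r) n (CARD('r) - a) (m - k)) x y =
       y ^ (CARD('r) - a) * EE m (m - k) x y + y ^ (CARD('r) - (CARD('r) - a)) * EE m (m - (m - k)) x y
       - y ^ (CARD('r) - (CARD('r) - a)) * EE m (m - k) x y - y ^ (CARD('r) - a) * EE m (m - (m - k)) x y"
      using gmat_poly[of "CARD('r) - a" "CARD('r)" "m - k" n x y] unfolding m_def by simp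
    have "CARD('r) - (CARD('r) - a) = a" "m - (m - k) = k" using ar km by auto
    thus ?thesis unfolding i l fd g by simp
  qed
qed

lemma dep_empty:
  assumes gp: "gen_pos n (V::nat \<Rightarrow> real^'r::finite)" and rn: "CARD('r) = n"
  shows "dep_patterns n V = {}"
proof (rule ccontr)
  assume "dep_patterns n V \<noteq> {}"
  then obtain F where "F \<in> dep_patterns n V" by blast
  then obtain lam where l: "supp n lam \<noteq> {}" "isdep n V lam" unfolding dep_patterns_iff by blast
  have "CARD('r) + 1 \<le> card (supp n lam)" using supp_card[OF gp _ l(2) l(1)] rn by simp
  moreover have "card (supp n lam) \<le> n" using card_mono[OF _ supp_sub, of n lam] by simp
  ultimately show False using rn by simp
qed

lemma step:
  fixes A B :: "nat \<Rightarrow> real^'r::finite"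
  assumes rn: "CARD('r) \<le> n" and mut: "mutation n A B G"
  shows "fstar n A x y - fstar n B x y = polyG CARD('r) (n - CARD('r)) G x y"
proof -
  have gpA: "gen_pos n A" and gpB: "gen_pos n B" using mut unfolding mutation_def by auto
  obtain P :: "real \<Rightarrow> nat \<Rightarrow> real^'r" and t0 :: real and R :: "nat set" and Y :: "nat \<Rightarrow> real" where
    h: "(\<forall>i<n. continuous_on {0..1} (\<lambda>t. P t i))" "(\<forall>i<n. P 0 i = A i)" "(\<forall>i<n. P 1 i = B i)"
       "0 < t0" "t0 < 1" "(\<forall>t\<in>{0..1}. t \<noteq> t0 \<longrightarrow> gen_pos n (P t))"
       "R \<subseteq> {..<n}" "card R = CARD('r)"
       "(\<forall>S. S \<subseteq> {..<n} \<and> card S = CARD('r) \<longrightarrow> (\<not> cols_indep (P t0) S \<longleftrightarrow> S = R))"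
       "(\<forall>S. S \<subseteq> {..<n} \<and> card S = CARD('r) - 1 \<longrightarrow> cols_indep (P t0) S)"
       "(\<forall>s t. 0 \<le> s \<and> s < t0 \<and> t0 < t \<and> t \<le> 1 \<longrightarrow> sgn (det_cols (P s) R) \<noteq> sgn (det_cols (P t) R))"
       "{F \<in> covectors n B - covectors n A. \<forall>i<n. F i \<in> {-1, 1}} = {Y, - Y}"
       "G = gmat (CARD('r)) n (card (R \<inter> {j. Y j = -1})) (card ({j. j < n \<and> Y j = -1} - R))"
    using conjunct2[OF conjunct2[OF mut[unfolded mutation_def]]] by (elim exE conjE) blast
  have ctx: "mctx n A B P t0 R"
    unfolding mctx_def using rn gpA gpB h(1-11) by (intro conjI) auto
  show ?thesis
  proof (cases "CARD('r) < n")
    case True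
    show ?thesis unfolding h(13) by (rule step_lt[OF ctx True h(12)])
  next
    case False
    hence eq: "CARD('r) = n" using rn by simp
    have Rn: "R = {..<n}" using h(7,8) eq by (intro card_subset_eq) auto
    have "{j. j < n \<and> Y j = -1} - R = {}" using Rn by auto
    hence "G = (\<lambda>j k. 0)" unfolding h(13) gmat_def using eq by (auto simp: fun_eq_iff)
    hence "polyG CARD('r) (n - CARD('r)) G x y = 0" unfolding polyG_def by simp
    moreover have "fstar n A x y = 0" "fstar n B x y = 0"
      unfolding fstar_def using dep_empty[OF gpA eq] dep_empty[OF gpB eq] by simp_all
    ultimately show ?thesis by simp
  qed
qed

lemma poly_ne_a:
  fixes d :: "nat \<Rightarrow> real"
  assumes h: "\<forall>x. x \<noteq> a \<longrightarrow> (\<Sum>j\<le>r. d j * x ^ j) = 0"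
  shows "\<forall>j\<le>r. d j = 0"
proof (rule ccontr)
  assume "\<not> ?thesis"
  then obtain j where j: "j \<le> r" "d j \<noteq> 0" by blast
  have fin: "finite {x. (\<Sum>j\<le>r. d j * x ^ j) = 0}" by (rule polyfun_roots_finite[of d j r, OF j(2) j(1)])
  have "UNIV - {a} \<subseteq> {x. (\<Sum>j\<le>r. d j * x ^ j) = 0}" using h by auto
  hence "finite (UNIV - {a})" using fin finite_subset by blast
  hence "finite (insert a (UNIV - {a}))" by simp
  hence "finite (UNIV :: real set)" by (simp add: insert_UNIV)
  thus False using infinite_UNIV_char_0 by blast
qed

lemma cont_zero:
  fixes g :: "real \<Rightarrow> real"
  assumes c: "isCont g y0" and z: "\<forall>y. y \<noteq> y0 \<longrightarrow> g y = 0"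
  shows "g y0 = 0"
proof -
  have t1: "(g \<longlongrightarrow> g y0) (at y0)" using c unfolding isCont_def .
  have "eventually (\<lambda>y. g y = 0) (at y0)"
    unfolding eventually_at using z by (intro exI[of _ 1]) auto
  hence t2: "(g \<longlongrightarrow> 0) (at y0)" by (rule tendsto_eventually)
  show ?thesis using tendsto_unique[OF at_neq_bot t1 t2] .
qed

lemma split_aux:
  fixes c :: "nat \<Rightarrow> nat \<Rightarrow> real"
  assumes k0: "c j 0 = 0"
  shows "(\<Sum>k\<le>Suc m. c j k * (x + y) ^ k * (x + 1) ^ (Suc m - k) * y ^ j)
        = (x + y) * (\<Sum>k\<le>m. c j (Suc k) * (x + y) ^ k * (x + 1) ^ (m - k) * y ^ j)"
proof -
  have "(\<Sum>k\<le>Suc m. c j k * (x + y) ^ k * (x + 1) ^ (Suc m - k) * y ^ j)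
      = c j 0 * (x + y) ^ 0 * (x + 1) ^ (Suc m - 0) * y ^ j + (\<Sum>k\<le>m. c j (Suc k) * (x + y) ^ Suc k * (x + 1) ^ (Suc m - Suc k) * y ^ j)"
    by (rule sum.atMost_Suc_shift)
  also have "\<dots> = (\<Sum>k\<le>m. (x + y) * (c j (Suc k) * (x + y) ^ k * (x + 1) ^ (m - k) * y ^ j))"
    using k0 by (simp add: mult_ac)
  also have "\<dots> = (x + y) * (\<Sum>k\<le>m. c j (Suc k) * (x + y) ^ k * (x + 1) ^ (m - k) * y ^ j)"
    by (rule sum_distrib_left[symmetric])
  finally show ?thesis .
qed

lemma neg_aux:
  fixes c :: "nat \<Rightarrow> nat \<Rightarrow> real"
  assumes "(\<Sum>j\<le>r. c j 0 * (x + 1) ^ Suc m * (- x) ^ j) = 0"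
  shows "(x + 1) ^ Suc m * (\<Sum>j\<le>r. (c j 0 * (-1) ^ j) * x ^ j) = 0"
proof -
  have e: "c j 0 * (x + 1) ^ Suc m * (- x) ^ j = (x + 1) ^ Suc m * ((c j 0 * (-1) ^ j) * x ^ j)" for j
    by (simp only: power_minus[of x j] mult_ac)
  have "(\<Sum>j\<le>r. c j 0 * (x + 1) ^ Suc m * (- x) ^ j) = (\<Sum>j\<le>r. (x + 1) ^ Suc m * ((c j 0 * (-1) ^ j) * x ^ j))"
    by (rule sum.cong[OF refl]) (rule e)
  also have "\<dots> = (x + 1) ^ Suc m * (\<Sum>j\<le>r. (c j 0 * (-1) ^ j) * x ^ j)"
    by (rule sum_distrib_left[symmetric])
  finally show ?thesis using assms by simp
qed

lemma polyG_unique: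
  fixes c :: "nat \<Rightarrow> nat \<Rightarrow> real"
  shows "(\<forall>x y. (\<Sum>j\<le>r. \<Sum>k\<le>m. c j k * (x + y) ^ k * (x + 1) ^ (m - k) * y ^ j) = 0) \<Longrightarrow>
    \<forall>j\<le>r. \<forall>k\<le>m. c j k = 0"
proof (induction m arbitrary: c)
  case (0 c)
  have "\<forall>x. x \<noteq> -1 \<longrightarrow> (\<Sum>j\<le>r. c j 0 * x ^ j) = 0"
  proof (intro allI impI)
    fix x :: real assume "x \<noteq> -1"
    have "(\<Sum>j\<le>r. c j 0 * (x - x + 1) ^ 0 * x ^ j) = 0" using 0[rule_format, of "x - 1" x] by simp
    thus "(\<Sum>j\<le>r. c j 0 * x ^ j) = 0" by simp
  qed
  hence "\<forall>j\<le>r. c j 0 = 0" by (rule poly_ne_a)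
  thus ?case by simp
next
  case (Suc m c)
  have k0: "\<forall>j\<le>r. c j 0 = 0"
  proof -
    have "\<forall>x. x \<noteq> -1 \<longrightarrow> (\<Sum>j\<le>r. (c j 0 * (-1) ^ j) * x ^ j) = 0"
    proof (intro allI impI)
      fix x :: real assume x: "x \<noteq> -1"
      have "(\<Sum>j\<le>r. \<Sum>k\<le>Suc m. c j k * (x + - x) ^ k * (x + 1) ^ (Suc m - k) * (- x) ^ j) = 0"
        using Suc.prems by blast
      moreover have "(\<Sum>k\<le>Suc m. c j k * (x + - x) ^ k * (x + 1) ^ (Suc m - k) * (- x) ^ j)
          = c j 0 * (x + 1) ^ Suc m * (- x) ^ j" for j
      proof -
        have "(\<Sum>k\<le>Suc m. c j k * (x + - x) ^ k * (x + 1) ^ (Suc m - k) * (- x) ^ j)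
            = (\<Sum>k\<le>Suc m. if k = 0 then c j 0 * (x + 1) ^ Suc m * (- x) ^ j else 0)"
          by (intro sum.cong) auto
        also have "\<dots> = c j 0 * (x + 1) ^ Suc m * (- x) ^ j" by (simp add: sum.delta)
        finally show ?thesis .
      qed
      ultimately have "(\<Sum>j\<le>r. c j 0 * (x + 1) ^ Suc m * (- x) ^ j) = 0" by simp
      hence "(x + 1) ^ Suc m * (\<Sum>j\<le>r. (c j 0 * (-1) ^ j) * x ^ j) = 0"
        by (rule neg_aux)
      moreover have "(x + 1) ^ Suc m \<noteq> 0" using x by (simp add: add_eq_0_iff)
      ultimately show "(\<Sum>j\<le>r. (c j 0 * (-1) ^ j) * x ^ j) = 0" by simp
    qed
    hence "\<forall>j\<le>r. c j 0 * (-1) ^ j = 0" by (rule poly_ne_a)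
    thus ?thesis by simp
  qed
  define c' where "c' = (\<lambda>j k. c j (Suc k))"
  define Q where "Q = (\<lambda>x y. (\<Sum>j\<le>r. \<Sum>k\<le>m. c' j k * (x + y) ^ k * (x + 1) ^ (m - k) * y ^ j))"
  have split: "(\<Sum>j\<le>r. \<Sum>k\<le>Suc m. c j k * (x + y) ^ k * (x + 1) ^ (Suc m - k) * y ^ j) = (x + y) * Q x y" for x y
  proof -
    have "(\<Sum>k\<le>Suc m. c j k * (x + y) ^ k * (x + 1) ^ (Suc m - k) * y ^ j)
        = (x + y) * (\<Sum>k\<le>m. c' j k * (x + y) ^ k * (x + 1) ^ (m - k) * y ^ j)" if j: "j \<le> r" for j
      unfolding c'_def using k0 j by (intro split_aux) auto
    thus ?thesis unfolding Q_def by (simp add: sum_distrib_left)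
  qed
  have Q0: "Q x y = 0" for x y
  proof -
    have "continuous_on UNIV (\<lambda>y. Q x y)" unfolding Q_def by (intro continuous_intros)
    hence ct: "isCont (\<lambda>y. Q x y) (- x)" by (simp add: continuous_on_eq_continuous_at)
    have "\<forall>y. y \<noteq> - x \<longrightarrow> Q x y = 0"
    proof (intro allI impI)
      fix y :: real assume "y \<noteq> - x"
      hence "x + y \<noteq> 0" by linarith
      moreover have "(x + y) * Q x y = 0" using Suc.prems split by metis
      ultimately show "Q x y = 0" by simp
    qed
    hence "Q x (- x) = 0" using cont_zero[OF ct] by blast
    thus ?thesis using \<open>\<forall>y. y \<noteq> - x \<longrightarrow> Q x y = 0\<close> by (cases "y = - x") auto
  qed
  hence "\<forall>j\<le>r. \<forall>k\<le>m. c' j k = 0" using Suc.IH[of c'] unfolding Q_def by blast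
  hence "\<forall>j\<le>r. \<forall>k\<le>m. c j (Suc k) = 0" unfolding c'_def .
  show ?case
  proof (intro allI impI)
    fix j k assume "j \<le> r" "k \<le> Suc m"
    thus "c j k = 0" using k0 \<open>\<forall>j\<le>r. \<forall>k\<le>m. c j (Suc k) = 0\<close> by (cases k) auto
  qed
qed

lemma dep_cong:
  assumes "\<forall>i<n. V i = V' i"
  shows "dep_patterns n V = dep_patterns n V'"
proof -
  have "(\<Sum>i<n. lam i *\<^sub>R V i) = (\<Sum>i<n. lam i *\<^sub>R V' i)" for lam
    using assms by (intro sum.cong) auto
  thus ?thesis unfolding dep_patterns_def by simp
qed

lemma fstar_cong: "\<forall>i<n. V i = V' i \<Longrightarrow> fstar n V x y = fstar n V' x y"
  unfolding fstar_def by (simp only: dep_cong)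

lemma polyG_add: "polyG r m (\<lambda>j k. G1 j k + G2 j k) x y = polyG r m G1 x y + polyG r m G2 x y"
  unfolding polyG_def by (simp add: sum.distrib distrib_right)

lemma polyG_zero: "polyG r m (\<lambda>j k. 0) x y = 0"
  unfolding polyG_def by simp

lemma telescope:
  fixes Vs :: "nat \<Rightarrow> nat \<Rightarrow> real^'r::finite"
  assumes rn: "CARD('r) \<le> n" and muts: "\<forall>s<N. mutation n (Vs s) (Vs (Suc s)) (Gs s)"
  shows "fstar n (Vs 0) x y - fstar n (Vs N) x y = polyG CARD('r) (n - CARD('r)) (\<lambda>j k. \<Sum>s<N. Gs s j k) x y"
  using muts
proof (induction N)
  case 0 thus ?case using polyG_zero by simp
next
  case (Suc N)
  have IH: "fstar n (Vs 0) x y - fstar n (Vs N) x y = polyG CARD('r) (n - CARD('r)) (\<lambda>j k. \<Sum>s<N. Gs s j k) x y"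
    using Suc by simp
  have st: "fstar n (Vs N) x y - fstar n (Vs (Suc N)) x y = polyG CARD('r) (n - CARD('r)) (Gs N) x y"
    using step[OF rn] Suc.prems by simp
  have "(\<lambda>j k. \<Sum>s<Suc N. Gs s j k) = (\<lambda>j k. (\<Sum>s<N. Gs s j k) + Gs N j k)" by simp
  hence "polyG CARD('r) (n - CARD('r)) (\<lambda>j k. \<Sum>s<Suc N. Gs s j k) x y =
      polyG CARD('r) (n - CARD('r)) (\<lambda>j k. \<Sum>s<N. Gs s j k) x y + polyG CARD('r) (n - CARD('r)) (Gs N) x y"
    using polyG_add[of _ _ "\<lambda>j k. \<Sum>s<N. Gs s j k" "Gs N"] by simp
  thus ?case using IH st by simp
qed

lemma seq_poly:
  fixes V W :: "nat \<Rightarrow> real^'r::finite"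
  assumes rn: "CARD('r) \<le> n" and ms: "mut_seq n W V G"
  shows "fstar n W x y - fstar n V x y = polyG CARD('r) (n - CARD('r)) G x y"
proof -
  obtain Vs :: "nat \<Rightarrow> nat \<Rightarrow> real^'r" and Gs N where
    h: "\<forall>i<n. Vs 0 i = W i" "\<forall>i<n. Vs N i = V i" "\<forall>s<N. mutation n (Vs s) (Vs (Suc s)) (Gs s)"
       "G = (\<lambda>j k. \<Sum>s<N. Gs s j k)"
    using ms unfolding mut_seq_def by (elim exE conjE) blast
  have "fstar n W x y = fstar n (Vs 0) x y" by (rule fstar_cong[OF h(1), symmetric])
  moreover have "fstar n V x y = fstar n (Vs N) x y" by (rule fstar_cong[OF h(2), symmetric])
  ultimately show ?thesis using telescope[OF rn h(3)] h(4) by simp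
qed

theorem theorem1p13:
  fixes V W :: "nat \<Rightarrow> real^'r" and n :: nat
  assumes "CARD('r) \<le> n"
    and "gen_pos n V" and "gen_pos n W"
  shows "\<forall>G. mut_seq n W V G \<longrightarrow>
     (\<forall>x y :: real. fstar n W x y - fstar n V x y =
        (\<Sum>j\<le>CARD('r). \<Sum>k\<le>n - CARD('r).
            of_int (G j k) * (x + y) ^ k * (x + 1) ^ (n - CARD('r) - k) * y ^ j)) \<and>
     (\<forall>G'. mut_seq n V W G' \<longrightarrow>
        (\<forall>j\<le>CARD('r). \<forall>k\<le>n - CARD('r). G j k = - G' j k))"
proof (intro allI impI conjI)
  fix G assume G: "mut_seq n W V G"
  fix x y :: real
  show "fstar n W x y - fstar n V x y =
        (\<Sum>j\<le>CARD('r). \<Sum>k\<le>n - CARD('r).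
            of_int (G j k) * (x + y) ^ k * (x + 1) ^ (n - CARD('r) - k) * y ^ j)"
    using seq_poly[OF assms(1) G] unfolding polyG_def .
next
  fix G G' j k assume G: "mut_seq n W V G" and G': "mut_seq n V W G'"
    and jk: "j \<le> CARD('r)" "k \<le> n - CARD('r)"
  have "\<forall>x y. polyG CARD('r) (n - CARD('r)) (\<lambda>j k. G j k + G' j k) x y = 0"
  proof (intro allI)
    fix x y :: real
    have "polyG CARD('r) (n - CARD('r)) (\<lambda>j k. G j k + G' j k) x y =
        (fstar n W x y - fstar n V x y) + (fstar n V x y - fstar n W x y)"
      unfolding polyG_add seq_poly[OF assms(1) G] seq_poly[OF assms(1) G'] ..
    thus "polyG CARD('r) (n - CARD('r)) (\<lambda>j k. G j k + G' j k) x y = 0" by simp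
  qed
  hence "\<forall>x y. (\<Sum>j\<le>CARD('r). \<Sum>k\<le>n - CARD('r). real_of_int (G j k + G' j k) * (x + y) ^ k * (x + 1) ^ (n - CARD('r) - k) * y ^ j) = 0"
    unfolding polyG_def .
  hence "\<forall>j\<le>CARD('r). \<forall>k\<le>n - CARD('r). real_of_int (G j k + G' j k) = 0"
    by (rule polyG_unique)
  hence "real_of_int (G j k + G' j k) = 0" using jk by blast
  hence "G j k + G' j k = 0" by (simp only: of_int_eq_0_iff)
  thus "G j k = - G' j k" by linarith
qed

end
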